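(* Assume $f\in W^{1,\infty}(\mathbb{R})$ and that hypothesis (H) holds for Banach spaces $X,Z$. Then a pair $(u,m)\in C^{2,\alpha}(\mathbb{T}^d)\times C^{2,\alpha}(\mathbb{T}^d)$ solves the MFG system if and only if $F(u,m):=(u,m)+T(G(u,m))=0$.
   Context: $\mathbb{T}^d$ is the flat torus, $\lambda>0$, $\alpha\in(0,1)$, $m_0\in C^{0,\alpha}(\mathbb{T}^d)$ a probability density. The MFG system is $-\Delta u + \tfrac12|Du|^2 + \lambda u = f(m)$, $-\Delta m - \operatorname{div}(m Du) + \lambda m = \lambda m_0$ in $\mathbb{T}^d$. Hypothesis (H): $X$ and $Z$ are Banach spaces with continuous embeddings $C^{2,\alpha}(\mathbb{T}^d)\times C^{2,\alpha}(\mathbb{T}^d)\subset X\subset H^1(\mathbb{T}^d)\times L^2(\mathbb{T}^d)$ and $Z\subset L^1(\mathbb{T}^d)\times (W^{1,\infty}(\mathbb{T}^d))'$; for every $(v,\rho)\in X$, $G(v,\rho):=\big(\tfrac12|Dv|^2 - f(\rho),\, -\operatorname{div}(\rho Dv) - \lambda m_0\big)$ belongs to $Z$; and for every $(\xi,\zeta)\in Z$ the system $-\Delta v+\lambda v=\xi$, $-\Delta\rho+\lambda\rho=\zeta$ in $\mathbb{T}^d$ has a unique distributional solution $T(\xi,\zeta)$, which belongs to $X$. *)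

theory Defs
  imports "HOL-Analysis.Analysis"
begin

text \<open>The flat torus T^d is modelled by functions on real^'n (d = CARD('n))
  that are 1-periodic in every coordinate; integrals over T^d are integrals
  over the unit cube.  Distributions on T^d are real functionals on functions,
  normalised to vanish outside the smooth periodic test functions.\<close>

type_synonym ('n) tfun = "real^('n::finite) \<Rightarrow> real"
type_synonym 'n distr = "'n tfun \<Rightarrow> real"
type_synonym 'n dpair = "'n distr \<times> 'n distr"

definition cube :: "(real^('n::finite)) set" where
  "cube = cbox 0 1"

definition periodic :: "(real^('n::finite) \<Rightarrow> 'a) \<Rightarrow> bool" where
  "periodic u \<longleftrightarrow> (\<forall>x i. u (x + axis i 1) = u x)"

definition pd :: "('n::finite) \<Rightarrow> 'n tfun \<Rightarrow> real^'n \<Rightarrow> real" where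
  "pd i u x = deriv (\<lambda>t. u (x + t *\<^sub>R axis i 1)) 0"

fun pds :: "('n::finite) list \<Rightarrow> 'n tfun \<Rightarrow> 'n tfun" where
  "pds [] u = u"
| "pds (i # is) u = pd i (pds is u)"

definition grad :: "('n::finite) tfun \<Rightarrow> real^'n \<Rightarrow> real^'n" where
  "grad u x = (\<chi> i. pd i u x)"

definition hess :: "('n::finite) tfun \<Rightarrow> real^'n \<Rightarrow> real^'n^'n" where
  "hess u x = (\<chi> i j. pd j (pd i u) x)"

definition lap :: "('n::finite) tfun \<Rightarrow> real^'n \<Rightarrow> real" where
  "lap u x = (\<Sum>i\<in>UNIV. pd i (pd i u) x)"

definition diverg :: "(real^('n::finite) \<Rightarrow> real^'n) \<Rightarrow> real^'n \<Rightarrow> real" where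
  "diverg V x = (\<Sum>i\<in>UNIV. pd i (\<lambda>y. V y $ i) x)"

definition holder :: "real \<Rightarrow> (real^('n::finite) \<Rightarrow> 'b::real_normed_vector) \<Rightarrow> bool" where
  "holder \<alpha> g \<longleftrightarrow> (\<exists>C. \<forall>x y. norm (g x - g y) \<le> C * dist x y powr \<alpha>)"

definition C0a :: "real \<Rightarrow> ('n::finite) tfun \<Rightarrow> bool" where
  "C0a \<alpha> u \<longleftrightarrow> periodic u \<and> holder \<alpha> u"

definition C2a :: "real \<Rightarrow> ('n::finite) tfun \<Rightarrow> bool" where
  "C2a \<alpha> u \<longleftrightarrow> periodic u \<and>
     (\<exists>Du D2u. (\<forall>x. (u has_derivative (\<lambda>h. Du x \<bullet> h)) (at x)) \<and>
               (\<forall>x. (Du has_derivative (\<lambda>h. D2u x *v h)) (at x)) \<and>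
               holder \<alpha> (D2u :: real^'n \<Rightarrow> real^'n^'n))"

definition C2a_norm :: "real \<Rightarrow> ('n::finite) tfun \<Rightarrow> real" where
  "C2a_norm \<alpha> u = (SUP x. \<bar>u x\<bar>) + (SUP x. norm (grad u x)) + (SUP x. norm (hess u x))
     + (SUP p\<in>{p. fst p \<noteq> snd p}. norm (hess u (fst p) - hess u (snd p)) / dist (fst p) (snd p) powr \<alpha>)"

definition test_fun :: "('n::finite) tfun \<Rightarrow> bool" where
  "test_fun \<phi> \<longleftrightarrow> periodic \<phi> \<and>
     (\<forall>is i x. (\<lambda>t. pds is \<phi> (x + t *\<^sub>R axis i 1)) differentiable (at 0)) \<and>
     (\<forall>is. continuous_on UNIV (pds is \<phi>))"

definition W1inf_norm :: "('n::finite) tfun \<Rightarrow> real" where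
  "W1inf_norm \<phi> = (SUP x. \<bar>\<phi> x\<bar>) + (SUP x. norm (grad \<phi> x))"

definition L1_fun :: "('n::finite) tfun \<Rightarrow> bool" where
  "L1_fun v \<longleftrightarrow> periodic v \<and> v \<in> borel_measurable lborel \<and> set_integrable lborel cube v"

definition L2_fun :: "('n::finite) tfun \<Rightarrow> bool" where
  "L2_fun v \<longleftrightarrow> periodic v \<and> v \<in> borel_measurable lborel \<and>
     set_integrable lborel cube (\<lambda>x. (v x)\<^sup>2)"

definition L1_norm :: "('n::finite) tfun \<Rightarrow> real" where
  "L1_norm v = (LINT x:cube|lborel. \<bar>v x\<bar>)"

definition L2_norm :: "('n::finite) tfun \<Rightarrow> real" where
  "L2_norm v = sqrt (LINT x:cube|lborel. (v x)\<^sup>2)"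

definition distr :: "('n::finite) distr \<Rightarrow> bool" where
  "distr w \<longleftrightarrow> (\<forall>\<phi>. \<not> test_fun \<phi> \<longrightarrow> w \<phi> = 0) \<and>
     (\<forall>\<phi> \<psi> a b. test_fun \<phi> \<and> test_fun \<psi> \<longrightarrow>
        w (\<lambda>x. a * \<phi> x + b * \<psi> x) = a * w \<phi> + b * w \<psi>)"

definition distr_of :: "('n::finite) tfun \<Rightarrow> 'n distr" where
  "distr_of v = (\<lambda>\<phi>. if test_fun \<phi> then (LINT x:cube|lborel. v x * \<phi> x) else 0)"

definition dzero :: "('n::finite) distr" where "dzero = (\<lambda>\<phi>. 0)"
definition dadd :: "('n::finite) distr \<Rightarrow> 'n distr \<Rightarrow> 'n distr" where
  "dadd w1 w2 = (\<lambda>\<phi>. w1 \<phi> + w2 \<phi>)"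
definition dscale :: "real \<Rightarrow> ('n::finite) distr \<Rightarrow> 'n distr" where
  "dscale c w = (\<lambda>\<phi>. c * w \<phi>)"

definition pzero :: "('n::finite) dpair" where "pzero = (dzero, dzero)"
definition padd :: "('n::finite) dpair \<Rightarrow> 'n dpair \<Rightarrow> 'n dpair" where
  "padd w1 w2 = (dadd (fst w1) (fst w2), dadd (snd w1) (snd w2))"
definition pscale :: "real \<Rightarrow> ('n::finite) dpair \<Rightarrow> 'n dpair" where
  "pscale c w = (dscale c (fst w), dscale c (snd w))"
definition pdiff :: "('n::finite) dpair \<Rightarrow> 'n dpair \<Rightarrow> 'n dpair" where
  "pdiff w1 w2 = padd w1 (pscale (-1) w2)"

definition L1d :: "('n::finite) distr \<Rightarrow> bool" where
  "L1d w \<longleftrightarrow> (\<exists>v. L1_fun v \<and> w = distr_of v)"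
definition l1_val :: "('n::finite) distr \<Rightarrow> 'n tfun" where
  "l1_val w = (SOME v. L1_fun v \<and> w = distr_of v)"
definition L1d_norm :: "('n::finite) distr \<Rightarrow> real" where
  "L1d_norm w = L1_norm (l1_val w)"

definition L2d :: "('n::finite) distr \<Rightarrow> bool" where
  "L2d w \<longleftrightarrow> (\<exists>v. L2_fun v \<and> w = distr_of v)"
definition l2_val :: "('n::finite) distr \<Rightarrow> 'n tfun" where
  "l2_val w = (SOME v. L2_fun v \<and> w = distr_of v)"
definition L2d_norm :: "('n::finite) distr \<Rightarrow> real" where
  "L2d_norm w = L2_norm (l2_val w)"

definition h1_rep :: "('n::finite) distr \<Rightarrow> 'n tfun \<Rightarrow> (real^'n \<Rightarrow> real^'n) \<Rightarrow> bool" where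
  "h1_rep w v g \<longleftrightarrow> L2_fun v \<and> (\<forall>i. L2_fun (\<lambda>x. g x $ i)) \<and> w = distr_of v \<and>
     (\<forall>i \<phi>. test_fun \<phi> \<longrightarrow>
        (LINT x:cube|lborel. v x * pd i \<phi> x) = - (LINT x:cube|lborel. g x $ i * \<phi> x))"
definition H1d :: "('n::finite) distr \<Rightarrow> bool" where
  "H1d w \<longleftrightarrow> (\<exists>v g. h1_rep w v g)"
definition h1_val :: "('n::finite) distr \<Rightarrow> 'n tfun" where
  "h1_val w = fst (SOME p. h1_rep w (fst p) (snd p))"
definition h1_grad :: "('n::finite) distr \<Rightarrow> real^'n \<Rightarrow> real^'n" where
  "h1_grad w = snd (SOME p. h1_rep w (fst p) (snd p))"
definition H1d_norm :: "('n::finite) distr \<Rightarrow> real" where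
  "H1d_norm w = sqrt ((L2_norm (h1_val w))\<^sup>2 + (\<Sum>i\<in>UNIV. (L2_norm (\<lambda>x. h1_grad w x $ i))\<^sup>2))"

definition W1d :: "('n::finite) distr \<Rightarrow> bool" where
  "W1d w \<longleftrightarrow> distr w \<and> (\<exists>C. \<forall>\<phi>. test_fun \<phi> \<longrightarrow> \<bar>w \<phi>\<bar> \<le> C * W1inf_norm \<phi>)"
definition W1d_norm :: "('n::finite) distr \<Rightarrow> real" where
  "W1d_norm w = (SUP \<phi>\<in>{\<phi>. test_fun \<phi> \<and> W1inf_norm \<phi> \<le> 1}. \<bar>w \<phi>\<bar>)"

definition banach_on :: "('n::finite) dpair set \<Rightarrow> ('n dpair \<Rightarrow> real) \<Rightarrow> bool" where
  "banach_on X N \<longleftrightarrow>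
     pzero \<in> X \<and> (\<forall>w1\<in>X. \<forall>w2\<in>X. padd w1 w2 \<in> X) \<and> (\<forall>c. \<forall>w\<in>X. pscale c w \<in> X) \<and>
     (\<forall>w\<in>X. 0 \<le> N w \<and> (N w = 0 \<longleftrightarrow> w = pzero)) \<and>
     (\<forall>c. \<forall>w\<in>X. N (pscale c w) = \<bar>c\<bar> * N w) \<and>
     (\<forall>w1\<in>X. \<forall>w2\<in>X. N (padd w1 w2) \<le> N w1 + N w2) \<and>
     (\<forall>s. (\<forall>n. s n \<in> X) \<and> (\<forall>e>0. \<exists>K. \<forall>p\<ge>K. \<forall>q\<ge>K. N (pdiff (s p) (s q)) < e)
          \<longrightarrow> (\<exists>w\<in>X. (\<lambda>n. N (pdiff (s n) w)) \<longlonglongrightarrow> 0))"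

definition W1inf_R :: "(real \<Rightarrow> real) \<Rightarrow> bool" where
  "W1inf_R f \<longleftrightarrow> bounded (range f) \<and> (\<exists>L. L-lipschitz_on UNIV f)"

definition prob_density_C0a :: "real \<Rightarrow> ('n::finite) tfun \<Rightarrow> bool" where
  "prob_density_C0a \<alpha> m0 \<longleftrightarrow> C0a \<alpha> m0 \<and> (\<forall>x. 0 \<le> m0 x) \<and> (LINT x:cube|lborel. m0 x) = 1"

text \<open>The map G(v,rho) = (|Dv|^2/2 - f(rho), -div(rho Dv) - lambda m0), as distributions.\<close>
definition Gmap :: "(real \<Rightarrow> real) \<Rightarrow> real \<Rightarrow> ('n::finite) tfun \<Rightarrow> 'n dpair \<Rightarrow> 'n dpair" where
  "Gmap f lam m0 w =
     (let g = h1_grad (fst w); r = l2_val (snd w) in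
      (distr_of (\<lambda>x. (norm (g x))\<^sup>2 / 2 - f (r x)),
       (\<lambda>\<phi>. if test_fun \<phi> then (LINT x:cube|lborel. r x * (g x \<bullet> grad \<phi> x))
                               - lam * (LINT x:cube|lborel. m0 x * \<phi> x) else 0)))"

definition dist_sol :: "real \<Rightarrow> ('n::finite) distr \<Rightarrow> 'n distr \<Rightarrow> bool" where
  "dist_sol lam \<xi> v \<longleftrightarrow> distr v \<and>
     (\<forall>\<phi>. test_fun \<phi> \<longrightarrow> v (\<lambda>x. - lap \<phi> x + lam * \<phi> x) = \<xi> \<phi>)"

definition dist_sol_pair :: "real \<Rightarrow> ('n::finite) dpair \<Rightarrow> 'n dpair \<Rightarrow> bool" where
  "dist_sol_pair lam z w \<longleftrightarrow> dist_sol lam (fst z) (fst w) \<and> dist_sol lam (snd z) (snd w)"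

definition hypH :: "real \<Rightarrow> real \<Rightarrow> (real \<Rightarrow> real) \<Rightarrow> ('n::finite) tfun \<Rightarrow>
    'n dpair set \<Rightarrow> ('n dpair \<Rightarrow> real) \<Rightarrow> 'n dpair set \<Rightarrow> ('n dpair \<Rightarrow> real) \<Rightarrow>
    ('n dpair \<Rightarrow> 'n dpair) \<Rightarrow> bool" where
  "hypH \<alpha> lam f m0 X NX Z NZ T \<longleftrightarrow>
     banach_on X NX \<and> banach_on Z NZ \<and>
     (\<forall>u m. C2a \<alpha> u \<and> C2a \<alpha> m \<longrightarrow> (distr_of u, distr_of m) \<in> X) \<and>
     (\<exists>C. \<forall>u m. C2a \<alpha> u \<and> C2a \<alpha> m \<longrightarrow>
          NX (distr_of u, distr_of m) \<le> C * (C2a_norm \<alpha> u + C2a_norm \<alpha> m)) \<and>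
     (\<forall>w\<in>X. H1d (fst w) \<and> L2d (snd w)) \<and>
     (\<exists>C. \<forall>w\<in>X. H1d_norm (fst w) + L2d_norm (snd w) \<le> C * NX w) \<and>
     (\<forall>z\<in>Z. L1d (fst z) \<and> W1d (snd z)) \<and>
     (\<exists>C. \<forall>z\<in>Z. L1d_norm (fst z) + W1d_norm (snd z) \<le> C * NZ z) \<and>
     (\<forall>w\<in>X. Gmap f lam m0 w \<in> Z) \<and>
     (\<forall>z\<in>Z. T z \<in> X \<and> dist_sol_pair lam z (T z) \<and>
        (\<forall>w. dist_sol_pair lam z w \<longrightarrow> w = T z))"

definition MFG_solution :: "real \<Rightarrow> (real \<Rightarrow> real) \<Rightarrow> ('n::finite) tfun \<Rightarrow> 'n tfun \<Rightarrow> 'n tfun \<Rightarrow> bool" where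
  "MFG_solution lam f m0 u m \<longleftrightarrow>
     (\<forall>x. - lap u x + (norm (grad u x))\<^sup>2 / 2 + lam * u x = f (m x)) \<and>
     (\<forall>x. - lap m x - diverg (\<lambda>y. m y *\<^sub>R grad u y) x + lam * m x = lam * m0 x)"

end

theory Submission
  imports Defs
begin
inductive G :: "(real^'n::finite \<Rightarrow> real) \<Rightarrow> bool" where
  Gconst: "G (\<lambda>x. c)"
| Gcos: "G (\<lambda>x. cos (2*pi * x$j + a))"
| Gadd: "G f \<Longrightarrow> G g \<Longrightarrow> G (\<lambda>x. f x + g x)"
| Gmult: "G f \<Longrightarrow> G g \<Longrightarrow> G (\<lambda>x. f x * g x)"

lemma axis_comp: "(x + t *\<^sub>R axis i 1) $ j = x $ j + (if j = i then t else 0)"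
  by (simp add: axis_def)

lemma G_props:
  assumes "G \<phi>"
  shows "periodic \<phi> \<and> continuous_on UNIV \<phi> \<and>
    (\<forall>i. \<exists>\<psi>. G \<psi> \<and> (\<forall>x. ((\<lambda>t. \<phi> (x + t *\<^sub>R axis i 1)) has_real_derivative \<psi> x) (at 0)))"
  using assms
proof (induction rule: G.induct)
  case (Gconst c)
  then show ?case by (auto simp: periodic_def intro!: exI[of _ "\<lambda>x. 0"] G.Gconst)
next
  case (Gcos j a)
  have per: "periodic (\<lambda>x::real^'a. cos (2*pi * x$j + a))"
    unfolding periodic_def
  proof (intro allI)
    fix x :: "real^'a" and i
    have "cos (2*pi * (x + axis i 1)$j + a) = cos (2*pi * x$j + a + (if j = i then 2*pi else 0))"
      by (simp add: axis_def algebra_simps)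
    also have "\<dots> = cos (2*pi * x$j + a)"
      by (simp add: cos_add)
    finally show "cos (2*pi * (x + axis i 1)$j + a) = cos (2*pi * x$j + a)" .
  qed
  have cont: "continuous_on UNIV (\<lambda>x::real^'a. cos (2*pi * x$j + a))"
    by (intro continuous_intros)
  have der: "\<exists>\<psi>. G \<psi> \<and> (\<forall>x. ((\<lambda>t. cos (2*pi * (x + t *\<^sub>R axis i 1)$j + a)) has_real_derivative \<psi> x) (at 0))" for i
  proof (intro exI conjI allI)
    show "G (\<lambda>x::real^'a. (if j = i then 2*pi else 0) * cos (2*pi * x$j + (a + pi/2)))"
      by (intro G.Gmult G.Gconst G.Gcos)
    fix x :: "real^'a"
    have e: "(\<lambda>t. cos (2*pi * (x + t *\<^sub>R axis i 1)$j + a)) = (\<lambda>t. cos (2*pi * x$j + a + (if j = i then 2*pi else 0) * t))"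
      by (auto simp: axis_def algebra_simps)
    define c where "c = (if j = i then 2*pi else 0)"
    have D: "((\<lambda>t. cos (2*pi * x$j + a + c * t)) has_real_derivative
       - sin (2*pi * x$j + a + c * 0) * c) (at 0)"
      by (auto intro!: derivative_eq_intros)
    have a1: "2*pi * x$j + (a + pi/2) = (2*pi * x$j + a) + pi/2" by simp
    have V: "- sin (2*pi * x$j + a + c * 0) * c = c * cos (2*pi * x$j + (a + pi/2))"
    proof -
      have h: "cos ((2*pi * x$j + a) + pi/2) = - sin (2*pi * x$j + a)" by (simp only: cos_add cos_pi_half sin_pi_half)
      show ?thesis unfolding a1 h by simp
    qed
    show "((\<lambda>t. cos (2*pi * (x + t *\<^sub>R axis i 1)$j + a)) has_real_derivative
        (if j = i then 2*pi else 0) * cos (2*pi * x$j + (a + pi/2))) (at 0)"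
    proof -
      have "((\<lambda>t. cos (2*pi * x$j + a + c * t)) has_real_derivative c * cos (2*pi * x$j + (a + pi/2))) (at 0)"
        using D unfolding V .
      then show ?thesis unfolding e c_def .
    qed
  qed
  show ?case using per cont der by blast
next
  case (Gadd f g)
  have per: "periodic (\<lambda>x. f x + g x)" using Gadd.IH by (simp add: periodic_def)
  have cont: "continuous_on UNIV (\<lambda>x. f x + g x)" using Gadd.IH by (intro continuous_intros) auto
  have "\<exists>\<psi>. G \<psi> \<and> (\<forall>x. ((\<lambda>t. f (x + t *\<^sub>R axis i 1) + g (x + t *\<^sub>R axis i 1)) has_real_derivative \<psi> x) (at 0))" for i
  proof -
    obtain \<psi>1 \<psi>2 where "G \<psi>1" "G \<psi>2"
      and d1: "\<And>x. ((\<lambda>t. f (x + t *\<^sub>R axis i 1)) has_real_derivative \<psi>1 x) (at 0)"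
      and d2: "\<And>x. ((\<lambda>t. g (x + t *\<^sub>R axis i 1)) has_real_derivative \<psi>2 x) (at 0)"
      using Gadd.IH by blast
    show ?thesis
      by (rule exI[of _ "\<lambda>x. \<psi>1 x + \<psi>2 x"]) (auto intro!: G.Gadd \<open>G \<psi>1\<close> \<open>G \<psi>2\<close> DERIV_add d1 d2)
  qed
  then show ?case using per cont by blast
next
  case (Gmult f g)
  have per: "periodic (\<lambda>x. f x * g x)" using Gmult.IH by (simp add: periodic_def)
  have cont: "continuous_on UNIV (\<lambda>x. f x * g x)" using Gmult.IH by (intro continuous_intros) auto
  have "\<exists>\<psi>. G \<psi> \<and> (\<forall>x. ((\<lambda>t. f (x + t *\<^sub>R axis i 1) * g (x + t *\<^sub>R axis i 1)) has_real_derivative \<psi> x) (at 0))" for i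
  proof -
    obtain \<psi>1 \<psi>2 where "G \<psi>1" "G \<psi>2"
      and d1: "\<And>x. ((\<lambda>t. f (x + t *\<^sub>R axis i 1)) has_real_derivative \<psi>1 x) (at 0)"
      and d2: "\<And>x. ((\<lambda>t. g (x + t *\<^sub>R axis i 1)) has_real_derivative \<psi>2 x) (at 0)"
      using Gmult.IH by blast
    have "((\<lambda>t. f (x + t *\<^sub>R axis i 1) * g (x + t *\<^sub>R axis i 1)) has_real_derivative \<psi>1 x * g x + f x * \<psi>2 x) (at 0)" for x
      using DERIV_mult[OF d1[of x] d2[of x]] by (simp add: mult.commute)
    then show ?thesis
      by (intro exI[of _ "\<lambda>x. \<psi>1 x * g x + f x * \<psi>2 x"]) (auto intro!: G.Gadd G.Gmult \<open>G \<psi>1\<close> \<open>G \<psi>2\<close> Gmult.hyps)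
  qed
  then show ?case using per cont by blast
qed

lemma pd_eq:
  assumes "\<And>x. ((\<lambda>t. \<phi> (x + t *\<^sub>R axis i 1)) has_real_derivative \<psi> x) (at 0)"
  shows "pd i \<phi> = \<psi>"
  using assms by (auto simp: pd_def intro!: ext DERIV_imp_deriv)

lemma G_pd: assumes "G \<phi>" shows "G (pd i \<phi>)"
proof -
  obtain \<psi> where "G \<psi>" "\<forall>x. ((\<lambda>t. \<phi> (x + t *\<^sub>R axis i 1)) has_real_derivative \<psi> x) (at 0)"
    using G_props[OF assms] by blast
  then show ?thesis using pd_eq[of \<phi> i \<psi>] by simp
qed

lemma G_pds: "G \<phi> \<Longrightarrow> G (pds is \<phi>)"
  by (induction "is") (auto intro: G_pd)

lemma G_test: assumes "G \<phi>" shows "test_fun \<phi>"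
  unfolding test_fun_def
proof (intro conjI allI)
  show "periodic \<phi>" using G_props[OF assms] by blast
  fix "is"
  have g: "G (pds is \<phi>)" by (rule G_pds[OF assms])
  show "continuous_on UNIV (pds is \<phi>)" using G_props[OF g] by blast
  fix i x
  show "(\<lambda>t. pds is \<phi> (x + t *\<^sub>R axis i 1)) differentiable at 0"
    using G_props[OF g] real_differentiable_def by blast
qed

lemma cos_thresh:
  fixes \<delta> y :: real
  assumes "0 < \<delta>" "\<delta> < 1/2" "\<bar>y\<bar> \<le> 1 - \<delta>"
  shows "(cos (2*pi*y) > cos (2*pi*\<delta>)) = (\<bar>y\<bar> < \<delta>)"
proof -
  have cs: "cos (2*pi*y) = cos (2*pi*\<bar>y\<bar>)"
    by (simp add: abs_if)
  define r where "r = \<bar>y\<bar>"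
  have r0: "0 \<le> r" "r \<le> 1 - \<delta>" using assms by (auto simp: r_def)
  have "cos (2*pi*r) > cos (2*pi*\<delta>) \<longleftrightarrow> r < \<delta>"
  proof
    assume "r < \<delta>"
    then show "cos (2*pi*r) > cos (2*pi*\<delta>)"
      using r0 assms by (intro cos_monotone_0_pi) auto
  next
    assume h: "cos (2*pi*r) > cos (2*pi*\<delta>)"
    show "r < \<delta>"
    proof (rule ccontr)
      assume "\<not> r < \<delta>"
      then have rd: "\<delta> \<le> r" by simp
      show False
      proof (cases "r \<le> 1/2")
        case True
        then have "cos (2*pi*r) \<le> cos (2*pi*\<delta>)"
          using rd assms by (intro cos_monotone_0_pi_le) auto
        then show False using h by simp
      next
        case False
        have e: "cos (2*pi*r) = cos (2*pi*(1 - r))"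
        proof -
          have "cos (2*pi*(1-r)) = cos (2*pi - 2*pi*r)" by (simp add: algebra_simps)
          also have "\<dots> = cos (2*pi*r)" by (simp add: cos_diff)
          finally show ?thesis by simp
        qed
        have "cos (2*pi*(1-r)) \<le> cos (2*pi*\<delta>)"
          using False r0 assms by (intro cos_monotone_0_pi_le) auto
        then show False using h e by simp
      qed
    qed
  qed
  then show ?thesis using cs r_def by simp
qed

lemma G_poly:
  assumes "real_polynomial_function P" "G h"
  shows "G (\<lambda>x. P (h x))"
  using assms(1)
proof (induction rule: real_polynomial_function.induct)
  case (linear f)
  have fy: "f y = y * f 1" for y
  proof -
    have "f y = f (y *\<^sub>R 1)" by simp
    also have "\<dots> = y *\<^sub>R f 1" by (rule linear_scale[OF bounded_linear.linear[OF linear]])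
    finally show ?thesis by simp
  qed
  have e: "(\<lambda>x. f (h x)) = (\<lambda>x. h x * f 1)" by (rule ext, rule fy)
  show ?case unfolding e by (intro G.Gmult assms(2) G.Gconst)
next
  case (const c) then show ?case by (rule G.Gconst)
next
  case (add f g) then show ?case by (intro G.Gadd) auto
next
  case (mult f g) then show ?case by (intro G.Gmult) auto
qed

lemma G_prod:
  assumes "finite S" "\<And>i. i \<in> S \<Longrightarrow> G (f i)"
  shows "G (\<lambda>x. \<Prod>i\<in>S. f i x)"
  using assms
proof (induction S rule: finite_induct)
  case empty then show ?case using G.Gconst[of 1] by simp
next
  case (insert a F)
  have "G (\<lambda>x. f a x * (\<Prod>i\<in>F. f i x))"
    using insert by (intro G.Gmult) auto
  then show ?case using insert(1,2) by simp
qed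

lemma approx1d:
  fixes a b :: real and i :: "'n::finite"
  shows "\<exists>\<psi>::nat \<Rightarrow> real \<Rightarrow> real. (\<forall>k. G (\<lambda>x::real^'n. \<psi> k (x$i))) \<and> (\<forall>k t. \<bar>\<psi> k t\<bar> \<le> 2) \<and>
     (\<forall>t. 0 < t \<and> t < 1 \<longrightarrow> (\<lambda>k. \<psi> k t) \<longlonglongrightarrow> indicator {a<..<b} t)"
proof -
  define c where "c = max a 0"
  define d where "d = min b 1"
  have ind: "indicator {a<..<b} t = (if c < t \<and> t < d then 1 else (0::real))" if "0 < t" "t < 1" for t
    using that by (auto simp: c_def d_def indicator_def)
  consider "d \<le> c" | "c = 0 \<and> d = 1" | "c < d" "\<not> (c = 0 \<and> d = 1)" by linarith
  then show ?thesis
  proof cases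
    case 1
    show ?thesis
      by (rule exI[of _ "\<lambda>k t. 0"]) (use 1 ind in \<open>auto intro: G.Gconst\<close>)
  next
    case 2
    show ?thesis
      by (rule exI[of _ "\<lambda>k t. 1"]) (use 2 ind in \<open>auto intro: G.Gconst\<close>)
  next
    case 3
    have c0: "0 \<le> c" "d \<le> 1" by (auto simp: c_def d_def)
    define \<delta> where "\<delta> = (d - c) / 2"
    define m where "m = (c + d) / 2"
    have \<delta>pos: "0 < \<delta>" using 3 by (simp add: \<delta>_def)
    have \<delta>lt: "\<delta> < 1/2" using 3 c0 by (auto simp: \<delta>_def)
    define \<theta> where "\<theta> = cos (2*pi*\<delta>)"
    define q where "q t = cos (2*pi*t + (- 2*pi*m))" for t
    have qthr: "q t > \<theta> \<longleftrightarrow> c < t \<and> t < d" if "0 < t" "t < 1" for t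
    proof -
      have "q t = cos (2*pi*(t - m))" by (simp add: q_def algebra_simps)
      moreover have "\<bar>t - m\<bar> \<le> 1 - \<delta>" using that c0 unfolding abs_le_iff m_def \<delta>_def by (simp add: field_simps)
      ultimately have "q t > \<theta> \<longleftrightarrow> \<bar>t - m\<bar> < \<delta>"
        using cos_thresh[OF \<delta>pos \<delta>lt] by (simp add: \<theta>_def)
      also have "\<dots> \<longleftrightarrow> c < t \<and> t < d" unfolding abs_less_iff m_def \<delta>_def by (auto simp: field_simps)
      finally show ?thesis .
    qed
    define F where "F k y = min 1 (max 0 ((real k + 1) * (y - \<theta>)))" for k y
    have "\<exists>P. real_polynomial_function P \<and> (\<forall>y\<in>{-1..1}. \<bar>F k y - P y\<bar> < 1 / (real k + 1))" for k
    proof -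
      have "continuous_on {-1..1::real} (F k)" unfolding F_def by (intro continuous_intros)
      then obtain P where "real_polynomial_function P" "\<And>y. y \<in> {-1..1::real} \<Longrightarrow> \<bar>F k y - P y\<bar> < 1 / (real k + 1)"
        using Stone_Weierstrass_real_polynomial_function[of "{-1..1::real}" "F k" "1 / (real k + 1)"] by auto
      then show ?thesis by blast
    qed
    then obtain P where P: "\<And>k. real_polynomial_function (P k)"
      and Pap: "\<And>k y. y \<in> {-1..1} \<Longrightarrow> \<bar>F k y - P k y\<bar> < 1 / (real k + 1)"
      by metis
    have qr: "q t \<in> {-1..1}" for t by (auto simp: q_def)
    have Gq: "G (\<lambda>x::real^'n. q (x$i))"
      unfolding q_def by (rule G.Gcos)
    show ?thesis
    proof (intro exI[of _ "\<lambda>k t. P k (q t)"] conjI allI impI)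
      fix k
      show "G (\<lambda>x::real^'n. P k (q (x$i)))"
        by (rule G_poly[OF P Gq])
      fix t
      have "\<bar>F k (q t)\<bar> \<le> 1" by (auto simp: F_def)
      moreover have "\<bar>F k (q t) - P k (q t)\<bar> < 1 / (real k + 1)" using Pap qr by blast
      moreover have "1 / (real k + 1) \<le> 1" by (simp add: field_simps)
      ultimately show "\<bar>P k (q t)\<bar> \<le> 2" by linarith
    next
      fix t :: real
      assume t: "0 < t \<and> t < 1"
      have lim0: "(\<lambda>k. P k (q t) - F k (q t)) \<longlonglongrightarrow> 0"
      proof (rule Lim_null_comparison[where g="\<lambda>k. 1 / (real k + 1)"])
        show "\<forall>\<^sub>F k in sequentially. norm (P k (q t) - F k (q t)) \<le> 1 / (real k + 1)"
          using Pap[OF qr] by (auto intro!: always_eventually less_imp_le simp: abs_minus_commute)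
        show "(\<lambda>k. 1 / (real k + 1)) \<longlonglongrightarrow> 0"
          using LIMSEQ_inverse_real_of_nat by (simp add: inverse_eq_divide add.commute)
      qed
      have limF: "(\<lambda>k. F k (q t)) \<longlonglongrightarrow> (if q t > \<theta> then 1 else 0)"
      proof (cases "q t > \<theta>")
        case True
        obtain N :: nat where N: "1 / (q t - \<theta>) < real N" using reals_Archimedean2 by blast
        have "F k (q t) = 1" if "k \<ge> N" for k
        proof -
          have "1 / (q t - \<theta>) < real k + 1" using N that by linarith
          then have "1 < (real k + 1) * (q t - \<theta>)" using True by (simp add: field_simps)
          then show ?thesis by (simp add: F_def)
        qed
        then have "eventually (\<lambda>k. F k (q t) = 1) sequentially" by (auto simp: eventually_sequentially)
        then show ?thesis using True by (simp add: tendsto_eventually)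
      next
        case False
        have "F k (q t) = 0" for k
        proof -
          have "(real k + 1) * (q t - \<theta>) \<le> 0" using False by (intro mult_nonneg_nonpos) auto
          then show ?thesis by (simp add: F_def)
        qed
        then show ?thesis using False by simp
      qed
      have "(\<lambda>k. (P k (q t) - F k (q t)) + F k (q t)) \<longlonglongrightarrow> 0 + (if q t > \<theta> then 1 else 0)"
        by (intro tendsto_add lim0 limF)
      then show "(\<lambda>k. P k (q t)) \<longlonglongrightarrow> indicator {a<..<b} t"
        using ind[of t] qthr[of t] t by simp
    qed
  qed
qed

lemma emeasure_density_real:
  fixes g :: "'a::euclidean_space \<Rightarrow> real"
  assumes gi: "integrable lborel g" and g0: "\<And>x. 0 \<le> g x" and A: "A \<in> sets borel"
  shows "emeasure (density lborel (\<lambda>x. ennreal (g x))) A = ennreal (\<integral>x. g x * indicator A x \<partial>lborel)"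
proof -
  have gm: "g \<in> borel_measurable borel" using gi by (simp add: borel_measurable_integrable)
  have i2: "integrable lborel (\<lambda>x. g x * indicator A x)"
    using integrable_mult_indicator[of A lborel g] gi A by (simp add: mult.commute)
  have "emeasure (density lborel (\<lambda>x. ennreal (g x))) A = (\<integral>\<^sup>+ x. ennreal (g x) * indicator A x \<partial>lborel)"
    using gm A by (intro emeasure_density) auto
  also have "\<dots> = (\<integral>\<^sup>+ x. ennreal (g x * indicator A x) \<partial>lborel)"
    by (intro nn_integral_cong) (auto simp: indicator_def)
  also have "\<dots> = ennreal (\<integral>x. g x * indicator A x \<partial>lborel)"
    using i2 g0 by (intro nn_integral_eq_integral) auto
  finally show ?thesis .
qed

lemma AE_le0_of_boxes:
  fixes V :: "'a::euclidean_space \<Rightarrow> real"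
  assumes Vi: "integrable lborel V"
    and box0: "\<And>a b. (\<integral>x. V x * indicator (box a b) x \<partial>lborel) = 0"
  shows "AE x in lborel. V x \<le> 0"
proof -
  define P where "P x = max 0 (V x)" for x
  define Q where "Q x = max 0 (- V x)" for x
  have Pi: "integrable lborel P" unfolding P_def using Vi by (intro integrable_max integrable_zero) auto
  have Qi: "integrable lborel Q" unfolding Q_def using Vi by (intro integrable_max integrable_zero integrable_minus) auto
  have P0: "\<And>x. 0 \<le> P x" and Q0: "\<And>x. 0 \<le> Q x" by (auto simp: P_def Q_def)
  define M where "M = density lborel (\<lambda>x. ennreal (P x))"
  define N where "N = density lborel (\<lambda>x. ennreal (Q x))"
  have eqbox: "emeasure M (box a b) = emeasure N (box a b)" for a b
  proof -
    have iP: "integrable lborel (\<lambda>x. P x * indicator (box a b) x)"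
      using integrable_mult_indicator[of "box a b" lborel P] Pi by (simp add: mult.commute)
    have iQ: "integrable lborel (\<lambda>x. Q x * indicator (box a b) x)"
      using integrable_mult_indicator[of "box a b" lborel Q] Qi by (simp add: mult.commute)
    have "(\<integral>x. P x * indicator (box a b) x \<partial>lborel) - (\<integral>x. Q x * indicator (box a b) x \<partial>lborel)
        = (\<integral>x. P x * indicator (box a b) x - Q x * indicator (box a b) x \<partial>lborel)"
      using iP iQ by simp
    also have "\<dots> = (\<integral>x. V x * indicator (box a b) x \<partial>lborel)"
      by (intro Bochner_Integration.integral_cong) (auto simp: P_def Q_def indicator_def)
    also have "\<dots> = 0" by (rule box0)
    finally show ?thesis
      unfolding M_def N_def
      by (simp add: emeasure_density_real[OF Pi P0] emeasure_density_real[OF Qi Q0])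
  qed
  have "M = N"
  proof (rule measure_eqI_generator_eq[where E="range (\<lambda>(a, b). box a b)" and \<Omega>=UNIV
        and A="\<lambda>n::nat. box (- (real n *\<^sub>R One)) (real n *\<^sub>R One)"])
    show "Int_stable (range (\<lambda>(a, b). box a b::'a set))"
      by (auto simp: Int_stable_def box_Int_box)
    show "range (\<lambda>(a, b). box a b::'a set) \<subseteq> Pow UNIV" by simp
    show "sets M = sigma_sets UNIV (range (\<lambda>(a, b). box a b))"
      by (simp add: M_def borel_eq_box)
    show "sets N = sigma_sets UNIV (range (\<lambda>(a, b). box a b))"
      by (simp add: N_def borel_eq_box)
    show "range (\<lambda>n::nat. box (- (real n *\<^sub>R One)) (real n *\<^sub>R One)) \<subseteq> range (\<lambda>(a, b). box a b::'a set)"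
      by auto
    show "(\<Union>n::nat. box (- (real n *\<^sub>R One)) (real n *\<^sub>R One)) = (UNIV::'a set)"
      by (rule UN_box_eq_UNIV)
    show "emeasure M (box (- (real n *\<^sub>R One)) (real n *\<^sub>R One)) \<noteq> \<infinity>" for n
      unfolding M_def by (simp add: emeasure_density_real[OF Pi P0])
    show "emeasure M X = emeasure N X" if "X \<in> range (\<lambda>(a, b). box a b)" for X
      using that eqbox by auto
  qed
  define S where "S = {x. 0 < V x}"
  have Sb: "S \<in> sets borel" unfolding S_def using Vi by (simp add: borel_measurable_integrable)
  have "(\<lambda>x. Q x * indicator S x) = (\<lambda>x. 0)"
    by (intro ext) (simp add: Q_def S_def indicator_def max_def)
  then have "(\<integral>x. Q x * indicator S x \<partial>lborel) = 0" by simp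
  then have "ennreal (\<integral>x. P x * indicator S x \<partial>lborel) = 0"
    using \<open>M = N\<close> emeasure_density_real[OF Pi P0 Sb] emeasure_density_real[OF Qi Q0 Sb]
    unfolding M_def N_def by simp
  moreover have "0 \<le> (\<integral>x. P x * indicator S x \<partial>lborel)"
    using P0 by (intro Bochner_Integration.integral_nonneg) auto
  ultimately have z: "(\<integral>x. P x * indicator S x \<partial>lborel) = 0" by simp
  have iPS: "integrable lborel (\<lambda>x. P x * indicator S x)"
    using integrable_mult_indicator[of S lborel P] Pi Sb by (simp add: mult.commute)
  have "AE x in lborel. P x * indicator S x = 0"
    using integral_nonneg_eq_0_iff_AE[OF iPS] z P0 by simp
  then show ?thesis
    by eventually_elim (auto simp: P_def S_def indicator_def split: if_splits)
qed

lemma prod_indicator_box: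
  fixes a b x :: "real^'n::finite"
  shows "(\<Prod>i\<in>UNIV. indicator {a$i<..<b$i} (x$i)) = (indicator (box a b) x :: real)"
proof (cases "x \<in> box a b")
  case True
  then show ?thesis by (simp add: mem_box_cart indicator_def)
next
  case False
  then obtain i where "\<not> (a$i < x$i \<and> x$i < b$i)" by (auto simp: mem_box_cart)
  then have "indicator {a$i<..<b$i} (x$i) = (0::real)" by (simp add: indicator_def)
  then have "(\<Prod>i\<in>UNIV. indicator {a$i<..<b$i} (x$i)) = (0::real)"
    by (intro prod_zero) auto
  then show ?thesis using False by simp
qed

lemma box_orth:
  fixes v :: "real^'n::finite \<Rightarrow> real"
  assumes vm: "v \<in> borel_measurable lborel" and vi: "set_integrable lborel cube v"
    and orth: "\<And>\<phi>. G \<phi> \<Longrightarrow> (LINT x:cube|lborel. v x * \<phi> x) = 0"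
  shows "(\<integral>x. indicator cube x * v x * indicator (box a b) x \<partial>lborel) = 0"
proof -
  have "\<forall>i. \<exists>\<psi>::nat \<Rightarrow> real \<Rightarrow> real. (\<forall>k. G (\<lambda>x::real^'n. \<psi> k (x$i))) \<and> (\<forall>k t. \<bar>\<psi> k t\<bar> \<le> 2) \<and>
     (\<forall>t. 0 < t \<and> t < 1 \<longrightarrow> (\<lambda>k. \<psi> k t) \<longlonglongrightarrow> indicator {a$i<..<b$i} t)"
    using approx1d by blast
  then obtain \<Psi> where \<Psi>G: "\<And>i k. G (\<lambda>x::real^'n. \<Psi> i k (x$i))"
    and \<Psi>b: "\<And>i k t. \<bar>\<Psi> i k t\<bar> \<le> 2"
    and \<Psi>l: "\<And>i t. 0 < t \<Longrightarrow> t < 1 \<Longrightarrow> (\<lambda>k. \<Psi> i k t) \<longlonglongrightarrow> indicator {a$i<..<b$i} t"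
    by metis
  define \<Phi> where "\<Phi> k x = (\<Prod>i\<in>UNIV. \<Psi> i k (x$i))" for k x
  have G\<Phi>: "G (\<Phi> k)" for k
    unfolding \<Phi>_def[abs_def] by (intro G_prod) (auto intro: \<Psi>G)
  have \<Phi>m: "\<Phi> k \<in> borel_measurable lborel" for k
    using G_props[OF G\<Phi>[of k]] by (simp add: borel_measurable_continuous_onI)
  have \<Phi>b: "\<bar>\<Phi> k x\<bar> \<le> 2 ^ CARD('n)" for k x
  proof -
    have "\<bar>\<Phi> k x\<bar> = (\<Prod>i\<in>UNIV. \<bar>\<Psi> i k (x$i)\<bar>)" by (simp add: \<Phi>_def abs_prod)
    also have "\<dots> \<le> (\<Prod>i\<in>(UNIV::'n set). 2)" by (intro prod_mono) (auto intro: \<Psi>b)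
    finally show ?thesis by simp
  qed
  define V where "V x = indicator cube x * v x" for x
  have Vi: "integrable lborel V" using vi by (simp add: set_integrable_def V_def[abs_def])
  have null: "(cube::(real^'n) set) - box 0 1 \<in> null_sets lborel"
  proof -
    have "emeasure lborel (cbox (0::real^'n) 1 - box 0 1) = emeasure lborel (cbox (0::real^'n) 1) - emeasure lborel (box (0::real^'n) 1)"
      using emeasure_lborel_box_finite[of "0::real^'n" 1]
      by (intro emeasure_Diff) (auto simp: box_subset_cbox)
    also have "\<dots> = 0"
      by (simp add: emeasure_lborel_cbox_eq emeasure_lborel_box_eq inner_diff_left)
    finally show ?thesis by (auto simp: cube_def null_sets_def)
  qed
  have lim: "(\<lambda>k. \<integral>x. V x * \<Phi> k x \<partial>lborel) \<longlonglongrightarrow> (\<integral>x. V x * indicator (box a b) x \<partial>lborel)"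
  proof (rule integral_dominated_convergence[where w="\<lambda>x. 2 ^ CARD('n) * \<bar>V x\<bar>"])
    show "(\<lambda>x. V x * indicator (box a b) x) \<in> borel_measurable lborel"
      using Vi by (auto simp: borel_measurable_integrable)
    show "(\<lambda>x. V x * \<Phi> k x) \<in> borel_measurable lborel" for k
      using Vi \<Phi>m by (auto simp: borel_measurable_integrable)
    show "integrable lborel (\<lambda>x. 2 ^ CARD('n) * \<bar>V x\<bar>)"
      using Vi by (intro integrable_mult_right integrable_abs)
    show "AE x in lborel. norm (V x * \<Phi> k x) \<le> 2 ^ CARD('n) * \<bar>V x\<bar>" for k
    proof (rule AE_I2)
      fix x
      have "\<bar>V x\<bar> * \<bar>\<Phi> k x\<bar> \<le> \<bar>V x\<bar> * 2 ^ CARD('n)" by (rule mult_left_mono[OF \<Phi>b]) simp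
      then show "norm (V x * \<Phi> k x) \<le> 2 ^ CARD('n) * \<bar>V x\<bar>" by (simp add: abs_mult mult.commute)
    qed
    show "AE x in lborel. (\<lambda>k. V x * \<Phi> k x) \<longlonglongrightarrow> V x * indicator (box a b) x"
      using AE_not_in[OF null]
    proof eventually_elim
      case (elim x)
      show ?case
      proof (cases "x \<in> cube")
        case False
        then show ?thesis by (simp add: V_def)
      next
        case True
        then have xb: "x \<in> box 0 1" using elim by auto
        have "(\<lambda>k. \<Phi> k x) \<longlonglongrightarrow> (\<Prod>i\<in>UNIV. indicator {a$i<..<b$i} (x$i))"
          unfolding \<Phi>_def
        proof (intro tendsto_prod \<Psi>l)
          fix i show "0 < x$i" "x$i < 1" using xb by (auto simp: mem_box_cart)
        qed
        then show ?thesis unfolding prod_indicator_box by (intro tendsto_mult_left)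
      qed
    qed
  qed
  moreover have "(\<integral>x. V x * \<Phi> k x \<partial>lborel) = 0" for k
  proof -
    have "(\<integral>x. V x * \<Phi> k x \<partial>lborel) = (LINT x:cube|lborel. v x * \<Phi> k x)"
      unfolding set_lebesgue_integral_def V_def by (simp add: mult.assoc)
    then show ?thesis using orth[OF G\<Phi>[of k]] by simp
  qed
  ultimately have "(\<lambda>k. 0) \<longlonglongrightarrow> (\<integral>x. V x * indicator (box a b) x \<partial>lborel)"
    by simp
  then have "(\<integral>x. V x * indicator (box a b) x \<partial>lborel) = 0"
    using LIMSEQ_unique tendsto_const by blast
  then show ?thesis by (simp add: V_def)
qed

lemma fundamental_G:
  fixes v :: "real^'n::finite \<Rightarrow> real"
  assumes vm: "v \<in> borel_measurable lborel" and vi: "set_integrable lborel cube v"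
    and orth: "\<And>\<phi>. G \<phi> \<Longrightarrow> (LINT x:cube|lborel. v x * \<phi> x) = 0"
  shows "AE x in lborel. x \<in> cube \<longrightarrow> v x = 0"
proof -
  define V where "V x = indicator cube x * v x" for x
  have Vi: "integrable lborel V" using vi by (simp add: set_integrable_def V_def[abs_def])
  have b1: "(\<integral>x. V x * indicator (box a b) x \<partial>lborel) = 0" for a b
    using box_orth[OF vm vi orth] by (simp add: V_def)
  have b2: "(\<integral>x. - V x * indicator (box a b) x \<partial>lborel) = 0" for a b
    using b1[of a b] by simp
  have "AE x in lborel. V x \<le> 0" by (rule AE_le0_of_boxes[OF Vi b1])
  moreover have "AE x in lborel. - V x \<le> 0" by (rule AE_le0_of_boxes[OF _ b2]) (use Vi in simp)
  ultimately show ?thesis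
    by eventually_elim (auto simp: V_def)
qed

definition hiv :: "'n::finite \<Rightarrow> real \<Rightarrow> real^'n" where
  "hiv i c = (\<chi> j. if j = i then c else 1)"

lemma cube_split:
  fixes g :: "real^'n::finite \<Rightarrow> real"
  assumes gc: "continuous_on UNIV g" and c: "0 \<le> c" "c \<le> 1"
  shows "integral cube g = integral (cbox 0 (hiv i c)) g + integral (cbox (c *\<^sub>R axis i 1) 1) g"
proof -
  have k: "axis i (1::real) \<in> Basis" by (simp add: cart_eq_inner_axis)
  have gi: "g integrable_on cbox 0 1" using gc by (intro integrable_continuous) (auto intro: continuous_on_subset)
  have "integral cube g = integral (cbox 0 1 \<inter> {x. x \<bullet> axis i 1 \<le> c}) g + integral (cbox 0 1 \<inter> {x. x \<bullet> axis i 1 \<ge> c}) g"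
    unfolding cube_def by (rule integral_split[OF gi k])
  moreover have "cbox 0 1 \<inter> {x. x \<bullet> axis i 1 \<le> c} = cbox 0 (hiv i c)"
  proof (intro set_eqI iffI)
    fix x :: "real^'n" assume "x \<in> cbox 0 1 \<inter> {x. x \<bullet> axis i 1 \<le> c}"
    then show "x \<in> cbox 0 (hiv i c)" by (auto simp: mem_box_cart hiv_def cart_eq_inner_axis[symmetric])
  next
    fix x :: "real^'n" assume "x \<in> cbox 0 (hiv i c)"
    then have a: "0 \<le> x$j \<and> x$j \<le> (if j = i then c else 1)" for j by (simp add: mem_box_cart hiv_def)
    have "0 \<le> x$j \<and> x$j \<le> 1" for j using a[of j] c by (auto split: if_splits)
    moreover have "x$i \<le> c" using a[of i] by simp
    ultimately show "x \<in> cbox 0 1 \<inter> {x. x \<bullet> axis i 1 \<le> c}"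
      by (simp add: mem_box_cart cart_eq_inner_axis[symmetric])
  qed
  moreover have "cbox (0::real^'n) 1 \<inter> {x. x \<bullet> axis i 1 \<ge> c} = cbox (c *\<^sub>R axis i 1) 1"
  proof (intro set_eqI iffI)
    fix x :: "real^'n" assume "x \<in> cbox 0 1 \<inter> {x. x \<bullet> axis i 1 \<ge> c}"
    then have a: "0 \<le> x$j \<and> x$j \<le> 1" "c \<le> x$i" for j by (auto simp: mem_box_cart cart_eq_inner_axis[symmetric])
    have "(c *\<^sub>R axis i 1) $ j \<le> x$j" for j using a(1)[of j] a(2) by (auto simp: axis_def)
    then show "x \<in> cbox (c *\<^sub>R axis i 1) 1" using a by (simp add: mem_box_cart)
  next
    fix x :: "real^'n" assume "x \<in> cbox (c *\<^sub>R axis i 1) 1"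
    then have a: "(c *\<^sub>R axis i 1) $ j \<le> x$j \<and> x$j \<le> 1" for j by (simp add: mem_box_cart)
    have "0 \<le> x$j \<and> x$j \<le> 1" for j using a[of j] c by (auto simp: axis_def split: if_splits)
    moreover have "c \<le> x$i" using a[of i] by (simp add: axis_def)
    ultimately show "x \<in> cbox 0 1 \<inter> {x. x \<bullet> axis i 1 \<ge> c}"
      by (simp add: mem_box_cart cart_eq_inner_axis[symmetric])
  qed
  ultimately show ?thesis by simp
qed

lemma shift_int:
  fixes g :: "real^'n::finite \<Rightarrow> real"
  shows "integral (cbox a b) (\<lambda>x. g (x + c)) = integral (cbox (a + c) (b + c)) g"
proof -
  have "(\<lambda>x. g (x + c)) = g \<circ> (+) c" by (auto simp: add.commute)
  then show ?thesis using integral_shift_cbox_plus[of a b g c] by simp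
qed

lemma periodic_minus:
  assumes "periodic w" shows "w (x - axis i 1) = w x"
  using assms unfolding periodic_def by (metis diff_add_cancel)

lemma translate_inv:
  fixes w :: "real^'n::finite \<Rightarrow> real"
  assumes per: "periodic w" and wc: "continuous_on UNIV w" and t: "0 \<le> t" "t \<le> 1"
  shows "integral cube (\<lambda>x. w (x + t *\<^sub>R axis i 1)) = integral cube w"
proof -
  define e :: "real^'n" where "e = axis i 1"
  have wc': "continuous_on UNIV (\<lambda>x. w (x + t *\<^sub>R e))"
    by (intro continuous_on_compose2[OF wc] continuous_intros) auto
  have "integral cube (\<lambda>x. w (x + t *\<^sub>R e)) =
      integral (cbox 0 (hiv i (1 - t))) (\<lambda>x. w (x + t *\<^sub>R e)) + integral (cbox ((1 - t) *\<^sub>R e) 1) (\<lambda>x. w (x + t *\<^sub>R e))"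
    using cube_split[OF wc', of "1 - t" i] t by (simp add: e_def)
  also have "integral (cbox 0 (hiv i (1 - t))) (\<lambda>x. w (x + t *\<^sub>R e)) = integral (cbox (t *\<^sub>R e) 1) w"
  proof -
    have "integral (cbox 0 (hiv i (1 - t))) (\<lambda>x. w (x + t *\<^sub>R e)) = integral (cbox (0 + t *\<^sub>R e) (hiv i (1 - t) + t *\<^sub>R e)) w"
      by (rule shift_int)
    moreover have "hiv i (1 - t) + t *\<^sub>R e = 1"
      by (auto simp: vec_eq_iff hiv_def e_def axis_def)
    ultimately show ?thesis by simp
  qed
  also have "integral (cbox ((1 - t) *\<^sub>R e) 1) (\<lambda>x. w (x + t *\<^sub>R e)) = integral (cbox 0 (hiv i t)) w"
  proof -
    have "(\<lambda>x. w (x + t *\<^sub>R e)) = (\<lambda>x. w (x + (t - 1) *\<^sub>R e))"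
    proof
      fix x
      have "x + t *\<^sub>R e = (x + (t - 1) *\<^sub>R e) + axis i 1"
        by (simp add: e_def algebra_simps)
      then show "w (x + t *\<^sub>R e) = w (x + (t - 1) *\<^sub>R e)"
        using per unfolding periodic_def by metis
    qed
    then have "integral (cbox ((1 - t) *\<^sub>R e) 1) (\<lambda>x. w (x + t *\<^sub>R e)) =
        integral (cbox ((1 - t) *\<^sub>R e + (t - 1) *\<^sub>R e) (1 + (t - 1) *\<^sub>R e)) w"
      using shift_int by simp
    moreover have "(1 - t) *\<^sub>R e + (t - 1) *\<^sub>R e = 0" by (simp add: algebra_simps)
    moreover have "1 + (t - 1) *\<^sub>R e = hiv i t"
      by (auto simp: vec_eq_iff hiv_def e_def axis_def)
    ultimately show ?thesis by simp
  qed
  also have "integral (cbox (t *\<^sub>R e) 1) w + integral (cbox 0 (hiv i t)) w = integral cube w"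
    using cube_split[OF wc t, of i] by (simp add: e_def)
  finally show ?thesis by (simp add: e_def)
qed

lemma ibp0:
  fixes w w' :: "real^'n::finite \<Rightarrow> real"
  assumes per: "periodic w" and wc: "continuous_on UNIV w" and w'c: "continuous_on UNIV w'"
    and der: "\<And>x. ((\<lambda>t. w (x + t *\<^sub>R axis i 1)) has_real_derivative w' x) (at 0)"
  shows "integral cube w' = 0"
proof -
  define e :: "real^'n" where "e = axis i 1"
  define h where "h k = 1 / (real k + 1)" for k :: nat
  have h01: "0 < h k" "h k \<le> 1" for k by (auto simp: h_def field_simps)
  define K where "K = cbox (0::real^'n) (2 *\<^sub>R 1)"
  have "compact (w' ` K)" unfolding K_def
    by (intro compact_continuous_image continuous_on_subset[OF w'c]) auto
  then have "bounded (w' ` K)" by (rule compact_imp_bounded)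
  then obtain B where "\<forall>y\<in>w' ` K. norm y \<le> B" unfolding bounded_iff by blast
  then have B: "\<And>y. y \<in> K \<Longrightarrow> \<bar>w' y\<bar> \<le> B" by auto
  define f where "f k x = (w (x + h k *\<^sub>R e) - w x) / h k" for k x
  have derall: "DERIV (\<lambda>s. w (x + s *\<^sub>R e)) s :> w' (x + s *\<^sub>R e)" for x s
  proof -
    have "((\<lambda>t. w ((x + s *\<^sub>R e) + t *\<^sub>R e)) has_real_derivative w' (x + s *\<^sub>R e)) (at 0)"
      using der[of "x + s *\<^sub>R e"] by (simp add: e_def)
    then have "((\<lambda>t. w (x + (t + s) *\<^sub>R e)) has_real_derivative w' (x + s *\<^sub>R e)) (at 0)"
      by (simp add: algebra_simps)
    then show ?thesis using DERIV_shift[of "\<lambda>s. w (x + s *\<^sub>R e)" "w' (x + s *\<^sub>R e)" 0 s] by simp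
  qed
  have fint: "f k integrable_on cube" for k
    unfolding cube_def f_def
    by (intro integrable_continuous continuous_intros continuous_on_compose2[OF wc] continuous_on_subset[OF wc])
      (use h01[of k] in auto)
  have w'int: "w' integrable_on cube" unfolding cube_def
    by (intro integrable_continuous continuous_on_subset[OF w'c]) auto
  have bound: "norm (f k x) \<le> B" if "x \<in> cube" for k x
  proof -
    obtain z where z: "0 < z" "z < h k" "w (x + h k *\<^sub>R e) - w (x + 0 *\<^sub>R e) = (h k - 0) * w' (x + z *\<^sub>R e)"
      using MVT2[of 0 "h k" "\<lambda>s. w (x + s *\<^sub>R e)" "\<lambda>s. w' (x + s *\<^sub>R e)"] derall h01[of k] by blast
    have xj: "0 \<le> x$j \<and> x$j \<le> 1" for j using that by (simp add: cube_def mem_box_cart)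
    have "0 \<le> (x + z *\<^sub>R e)$j \<and> (x + z *\<^sub>R e)$j \<le> 2" for j
      using xj[of j] z h01[of k] by (cases "j = i") (simp_all add: e_def axis_def)
    then have "x + z *\<^sub>R e \<in> K" by (simp add: K_def mem_box_cart)
    then have "\<bar>w' (x + z *\<^sub>R e)\<bar> \<le> B" by (rule B)
    moreover have "f k x = w' (x + z *\<^sub>R e)" using z h01[of k] by (simp add: f_def)
    ultimately show ?thesis by simp
  qed
  have conv: "(\<lambda>k. f k x) \<longlonglongrightarrow> w' x" for x
  proof -
    have d0: "((\<lambda>t. w (x + t *\<^sub>R e)) has_real_derivative w' x) (at 0)" using der by (simp add: e_def)
    then have "((\<lambda>t. (w (x + t *\<^sub>R e) - w x) / t) \<longlongrightarrow> w' x) (at 0)"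
      using DERIV_def[THEN iffD1, OF d0] by simp
    moreover have "filterlim h (at 0) sequentially"
    proof (rule filterlim_atI)
      show "h \<longlonglongrightarrow> 0" unfolding h_def
        using LIMSEQ_inverse_real_of_nat by (simp add: inverse_eq_divide add.commute)
      show "\<forall>\<^sub>F k in sequentially. h k \<noteq> 0" using h01 by (auto intro!: always_eventually) (metis less_irrefl)
    qed
    ultimately show ?thesis unfolding f_def by (rule filterlim_compose)
  qed
  have lim: "(\<lambda>k. integral cube (f k)) \<longlonglongrightarrow> integral cube w'"
    using dominated_convergence(2)[of f cube "\<lambda>x. B" w'] fint bound conv
    by (auto simp: cube_def)
  have z: "integral cube (f k) = 0" for k
  proof -
    have i1: "(\<lambda>x. w (x + h k *\<^sub>R e)) integrable_on cube" unfolding cube_def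
      by (intro integrable_continuous continuous_on_compose2[OF wc] continuous_intros) auto
    have i2: "w integrable_on cube" unfolding cube_def
      by (intro integrable_continuous continuous_on_subset[OF wc]) auto
    have "integral cube (f k) = (integral cube (\<lambda>x. w (x + h k *\<^sub>R e)) - integral cube w) / h k"
      unfolding f_def using i1 i2 by (simp add: integral_diff)
    also have "\<dots> = 0" using translate_inv[OF per wc, of "h k" i] h01[of k] by (simp add: e_def)
    finally show ?thesis .
  qed
  have "(\<lambda>k. integral cube (f k)) = (\<lambda>k. 0)" using z by (intro ext) simp
  then have "(\<lambda>k. 0) \<longlonglongrightarrow> integral cube w'" using lim by simp
  then show ?thesis using LIMSEQ_unique[OF tendsto_const] by metis
qed

definition ddi :: "'n::finite \<Rightarrow> (real^'n \<Rightarrow> real) \<Rightarrow> bool" where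
  "ddi i a \<longleftrightarrow> (\<forall>x. ((\<lambda>t. a (x + t *\<^sub>R axis i 1)) has_real_derivative pd i a x) (at 0))"

definition C1i :: "'n::finite \<Rightarrow> (real^'n \<Rightarrow> real) \<Rightarrow> bool" where
  "C1i i a \<longleftrightarrow> periodic a \<and> continuous_on UNIV a \<and> continuous_on UNIV (pd i a) \<and> ddi i a"

definition C2i :: "(real^'n::finite \<Rightarrow> real) \<Rightarrow> bool" where
  "C2i a \<longleftrightarrow> (\<forall>i. C1i i a \<and> C1i i (pd i a))"

lemma periodic_pd: "periodic g \<Longrightarrow> periodic (pd i g)"
  unfolding periodic_def pd_def
proof (intro allI)
  fix x j assume "\<forall>x i. g (x + axis i 1) = g x"
  then have "(\<lambda>t. g (x + axis j 1 + t *\<^sub>R axis i 1)) = (\<lambda>t. g (x + t *\<^sub>R axis i 1))"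
    by (metis add.assoc add.commute)
  then show "deriv (\<lambda>t. g (x + axis j 1 + t *\<^sub>R axis i 1)) 0 = deriv (\<lambda>t. g (x + t *\<^sub>R axis i 1)) 0"
    by simp
qed

lemma pd_mult:
  assumes "ddi i a" "ddi i b"
  shows "pd i (\<lambda>x. a x * b x) = (\<lambda>x. pd i a x * b x + a x * pd i b x)"
proof (rule pd_eq)
  fix x
  show "((\<lambda>t. a (x + t *\<^sub>R axis i 1) * b (x + t *\<^sub>R axis i 1)) has_real_derivative pd i a x * b x + a x * pd i b x) (at 0)"
    using DERIV_mult[OF assms(1)[unfolded ddi_def, rule_format, of x] assms(2)[unfolded ddi_def, rule_format, of x]]
    by (simp add: mult.commute)
qed

lemma ddi_mult:
  assumes "ddi i a" "ddi i b"
  shows "ddi i (\<lambda>x. a x * b x)"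
  unfolding ddi_def pd_mult[OF assms]
proof
  fix x
  show "((\<lambda>t. a (x + t *\<^sub>R axis i 1) * b (x + t *\<^sub>R axis i 1)) has_real_derivative pd i a x * b x + a x * pd i b x) (at 0)"
    using DERIV_mult[OF assms(1)[unfolded ddi_def, rule_format, of x] assms(2)[unfolded ddi_def, rule_format, of x]]
    by (simp add: mult.commute)
qed

lemma C1i_mult:
  assumes "C1i i a" "C1i i b"
  shows "C1i i (\<lambda>x. a x * b x)"
  using assms unfolding C1i_def
  by (auto simp: pd_mult ddi_mult periodic_def intro!: continuous_intros)

lemma lint_cont:
  fixes g :: "real^'n::finite \<Rightarrow> real"
  assumes "continuous_on UNIV g"
  shows "set_integrable lborel cube g" "(LINT x:cube|lborel. g x) = integral cube g"
proof -
  show si: "set_integrable lborel cube g"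
    unfolding set_integrable_def cube_def
    using borel_integrable_compact[of "cbox (0::real^'n) 1" g] assms
    by (auto intro: continuous_on_subset)
  show "(LINT x:cube|lborel. g x) = integral cube g"
    by (rule set_borel_integral_eq_integral(2)[OF si])
qed

lemma ibp:
  fixes a b :: "real^'n::finite \<Rightarrow> real"
  assumes A: "C1i i a" and B: "C1i i b"
  shows "(LINT x:cube|lborel. a x * pd i b x) = - (LINT x:cube|lborel. pd i a x * b x)"
proof -
  have ca: "continuous_on UNIV a" "continuous_on UNIV (pd i a)" and cb: "continuous_on UNIV b" "continuous_on UNIV (pd i b)"
    using A B by (auto simp: C1i_def)
  have c1: "continuous_on UNIV (\<lambda>x. a x * pd i b x)" using ca cb by (intro continuous_intros)
  have c2: "continuous_on UNIV (\<lambda>x. pd i a x * b x)" using ca cb by (intro continuous_intros)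
  have "integral cube (\<lambda>x. pd i a x * b x + a x * pd i b x) = 0"
  proof (rule ibp0)
    show "periodic (\<lambda>x. a x * b x)" using A B by (auto simp: C1i_def periodic_def)
    show "continuous_on UNIV (\<lambda>x. a x * b x)" using ca cb by (intro continuous_intros)
    show "continuous_on UNIV (\<lambda>x. pd i a x * b x + a x * pd i b x)" using ca cb by (intro continuous_intros)
    fix x
    show "((\<lambda>t. a (x + t *\<^sub>R axis i 1) * b (x + t *\<^sub>R axis i 1)) has_real_derivative pd i a x * b x + a x * pd i b x) (at 0)"
    proof -
      have da: "ddi i a" and db: "ddi i b" using A B by (auto simp: C1i_def)
      show ?thesis using DERIV_mult[OF da[unfolded ddi_def, rule_format, of x] db[unfolded ddi_def, rule_format, of x]]
        by (simp add: mult.commute)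
    qed
  qed
  moreover have "integral cube (\<lambda>x. pd i a x * b x + a x * pd i b x) = integral cube (\<lambda>x. pd i a x * b x) + integral cube (\<lambda>x. a x * pd i b x)"
    using c1 c2 by (intro integral_add) (auto simp: cube_def intro!: integrable_continuous intro: continuous_on_subset)
  ultimately show ?thesis using lint_cont(2)[OF c1] lint_cont(2)[OF c2] by simp
qed

lemma holder_cont:
  fixes g :: "real^'n::finite \<Rightarrow> 'b::real_normed_vector"
  assumes "holder \<alpha> g" "0 < \<alpha>"
  shows "continuous_on UNIV g"
proof -
  obtain C where C: "\<And>x y. norm (g x - g y) \<le> C * dist x y powr \<alpha>" using assms(1) by (auto simp: holder_def)
  have "isCont g x" for x
  proof -
    have t1: "((\<lambda>y. dist y x) \<longlongrightarrow> 0) (at x)"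
      using tendsto_dist_iff[THEN iffD1, OF tendsto_ident_at[of x UNIV]] by simp
    have "((\<lambda>y. dist y x powr \<alpha>) \<longlongrightarrow> 0) (at x)"
      by (rule tendsto_zero_powrI[OF t1 tendsto_const _ assms(2)]) auto
    then have "((\<lambda>y. C * dist y x powr \<alpha>) \<longlongrightarrow> C * 0) (at x)"
      by (intro tendsto_mult tendsto_const)
    then have l: "((\<lambda>y. C * dist y x powr \<alpha>) \<longlongrightarrow> 0) (at x)" by simp
    have b: "\<forall>\<^sub>F y in at x. norm (g y - g x) \<le> C * dist y x powr \<alpha>"
      by (intro always_eventually allI) (rule C)
    have "((\<lambda>y. g y - g x) \<longlongrightarrow> 0) (at x)" by (rule Lim_null_comparison[OF b l])
    then have "(g \<longlongrightarrow> g x) (at x)" by (rule LIM_zero_cancel)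
    then show ?thesis by (simp add: isCont_def)
  qed
  then show ?thesis by (simp add: continuous_at_imp_continuous_on)
qed

lemma C2a_C2i:
  assumes "C2a \<alpha> u" "0 < \<alpha>"
  shows "C2i u"
proof -
  obtain Du D2u where per: "periodic u"
    and d1: "\<And>x. (u has_derivative (\<lambda>h. Du x \<bullet> h)) (at x)"
    and d2: "\<And>x. (Du has_derivative (\<lambda>h. D2u x *v h)) (at x)"
    and ho: "holder \<alpha> (D2u :: real^'a \<Rightarrow> real^'a^'a)"
    using assms(1) unfolding C2a_def by blast
  have lin: "((\<lambda>t::real. x + t *\<^sub>R axis i 1) has_derivative (\<lambda>t. t *\<^sub>R axis i 1)) (at 0)" for x :: "real^'a" and i
    by (auto intro!: derivative_eq_intros)
  have dd1: "((\<lambda>t. u (x + t *\<^sub>R axis i 1)) has_real_derivative Du x $ i) (at 0)" for x i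
  proof -
    have d1': "(u has_derivative (\<lambda>h. Du x \<bullet> h)) (at (x + 0 *\<^sub>R axis i 1))" using d1[of x] by simp
    have "((\<lambda>t. u (x + t *\<^sub>R axis i 1)) has_derivative (\<lambda>t. Du x \<bullet> (t *\<^sub>R axis i 1))) (at 0)"
      using has_derivative_compose[OF lin[of x i] d1'] by simp
    moreover have "(\<lambda>t. Du x \<bullet> (t *\<^sub>R axis i 1)) = (*) (Du x $ i)"
      by (auto simp: cart_eq_inner_axis inner_commute)
    ultimately show ?thesis by (simp add: has_field_derivative_def)
  qed
  have pd1: "pd i u = (\<lambda>x. Du x $ i)" for i by (rule pd_eq[OF dd1])
  have dd2: "((\<lambda>t. Du (x + t *\<^sub>R axis i 1) $ i) has_real_derivative D2u x $ i $ i) (at 0)" for x i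
  proof -
    have d2': "(Du has_derivative (\<lambda>h. D2u x *v h)) (at (x + 0 *\<^sub>R axis i 1))" using d2[of x] by simp
    have "((\<lambda>t. Du (x + t *\<^sub>R axis i 1)) has_derivative (\<lambda>t. D2u x *v (t *\<^sub>R axis i 1))) (at 0)"
      using has_derivative_compose[OF lin[of x i] d2'] by simp
    then have "((\<lambda>t. Du (x + t *\<^sub>R axis i 1) $ i) has_derivative (\<lambda>t. (D2u x *v (t *\<^sub>R axis i 1)) $ i)) (at 0)"
      by (rule bounded_linear.has_derivative[OF bounded_linear_vec_nth])
    moreover have "(\<lambda>t. (D2u x *v (t *\<^sub>R axis i 1)) $ i) = (*) (D2u x $ i $ i)"
      by (auto simp: matrix_vector_mult_scaleR matrix_vector_mult_basis column_def mult.commute)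
    ultimately show ?thesis by (simp add: has_field_derivative_def)
  qed
  have pd2: "pd i (pd i u) = (\<lambda>x. D2u x $ i $ i)" for i unfolding pd1 by (rule pd_eq[OF dd2])
  have cu: "continuous_on UNIV u"
    using d1 by (auto intro!: continuous_at_imp_continuous_on has_derivative_continuous)
  have cDu: "continuous_on UNIV Du"
    using d2 by (auto intro!: continuous_at_imp_continuous_on has_derivative_continuous)
  have cD2u: "continuous_on UNIV D2u" by (rule holder_cont[OF ho assms(2)])
  show ?thesis
    unfolding C2i_def C1i_def ddi_def
  proof (intro allI conjI)
    fix i
    show "periodic u" by (rule per)
    show "periodic (pd i u)" by (rule periodic_pd[OF per])
    show "continuous_on UNIV u" by (rule cu)
    show "continuous_on UNIV (pd i u)" unfolding pd1 using cDu by (intro continuous_intros)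
    then show "continuous_on UNIV (pd i u)" .
    show "continuous_on UNIV (pd i (pd i u))" unfolding pd2 using cD2u by (intro continuous_intros)
    fix x
    show "((\<lambda>t. u (x + t *\<^sub>R axis i 1)) has_real_derivative pd i u x) (at 0)" unfolding pd1 by (rule dd1)
    show "((\<lambda>t. pd i u (x + t *\<^sub>R axis i 1)) has_real_derivative pd i (pd i u) x) (at 0)"
      unfolding pd2 unfolding pd1 by (rule dd2)
  qed
qed

lemma pds_append: "pds (xs @ ys) u = pds xs (pds ys u)"
  by (induction xs) auto

lemma test_ddi:
  assumes "test_fun \<phi>"
  shows "ddi i (pds is \<phi>)"
  unfolding ddi_def pd_def
  using assms unfolding test_fun_def
  by (auto simp: DERIV_deriv_iff_real_differentiable)

lemma test_pd:
  assumes "test_fun \<phi>" shows "test_fun (pd i \<phi>)"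
  using assms unfolding test_fun_def
proof (intro conjI allI)
  assume a: "periodic \<phi> \<and> (\<forall>is i x. (\<lambda>t. pds is \<phi> (x + t *\<^sub>R axis i 1)) differentiable at 0) \<and> (\<forall>is. continuous_on UNIV (pds is \<phi>))"
  show "periodic (pd i \<phi>)" using a periodic_pd by blast
  fix "is"
  have e: "pds is (pd i \<phi>) = pds (is @ [i]) \<phi>" by (simp add: pds_append)
  show "continuous_on UNIV (pds is (pd i \<phi>))" unfolding e using a by blast
  fix j x
  show "(\<lambda>t. pds is (pd i \<phi>) (x + t *\<^sub>R axis j 1)) differentiable at 0" unfolding e using a by blast
qed

lemma test_C1i: assumes "test_fun \<phi>" shows "C1i i \<phi>"
proof -
  have "ddi i (pds [] \<phi>)" by (rule test_ddi[OF assms])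
  moreover have ac: "\<forall>is. continuous_on UNIV (pds is \<phi>)" using assms by (simp add: test_fun_def)
  moreover have "continuous_on UNIV (pds [i] \<phi>)" "continuous_on UNIV (pds [] \<phi>)"
    using ac[rule_format, of "[i]"] ac[rule_format, of "[]"] by auto
  ultimately show ?thesis using assms by (auto simp: C1i_def test_fun_def)
qed

lemma test_C2i: assumes "test_fun \<phi>" shows "C2i \<phi>"
  unfolding C2i_def using test_C1i[OF assms] test_C1i[OF test_pd[OF assms]] by blast

lemma pds_lin:
  assumes "test_fun \<phi>" "test_fun \<psi>"
  shows "pds is (\<lambda>x. a * \<phi> x + b * \<psi> x) = (\<lambda>x. a * pds is \<phi> x + b * pds is \<psi> x)"
proof (induction "is")
  case Nil then show ?case by simp
next
  case (Cons j "is")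
  have "pd j (\<lambda>x. a * pds is \<phi> x + b * pds is \<psi> x) = (\<lambda>x. a * pd j (pds is \<phi>) x + b * pd j (pds is \<psi>) x)"
  proof (rule pd_eq)
    fix x
    show "((\<lambda>t. a * pds is \<phi> (x + t *\<^sub>R axis j 1) + b * pds is \<psi> (x + t *\<^sub>R axis j 1)) has_real_derivative
        a * pd j (pds is \<phi>) x + b * pd j (pds is \<psi>) x) (at 0)"
      using test_ddi[OF assms(1), of j "is"] test_ddi[OF assms(2), of j "is"] unfolding ddi_def
      by (auto intro!: derivative_eq_intros)
  qed
  then show ?case using Cons by simp
qed

lemma test_lin:
  assumes "test_fun \<phi>" "test_fun \<psi>"
  shows "test_fun (\<lambda>x. a * \<phi> x + b * \<psi> x)"
  unfolding test_fun_def pds_lin[OF assms]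
proof (intro conjI allI)
  show "periodic (\<lambda>x. a * \<phi> x + b * \<psi> x)" using assms by (auto simp: test_fun_def periodic_def)
  fix "is"
  show "continuous_on UNIV (\<lambda>x. a * pds is \<phi> x + b * pds is \<psi> x)"
    using assms by (auto simp: test_fun_def intro!: continuous_intros)
  fix i x
  show "(\<lambda>t. a * pds is \<phi> (x + t *\<^sub>R axis i 1) + b * pds is \<psi> (x + t *\<^sub>R axis i 1)) differentiable at 0"
    using assms unfolding test_fun_def by (auto intro!: derivative_intros)
qed

lemma test_zero: "test_fun (\<lambda>x::real^'n::finite. 0)"
  by (rule G_test) (rule G.Gconst)

lemma test_sum:
  assumes "finite S" "\<And>i. i \<in> S \<Longrightarrow> test_fun (f i)"
  shows "test_fun (\<lambda>x. \<Sum>i\<in>S. f i x)"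
  using assms
proof (induction S rule: finite_induct)
  case empty then show ?case using test_zero by simp
next
  case (insert a F)
  have "test_fun (\<lambda>x. 1 * f a x + 1 * (\<Sum>i\<in>F. f i x))"
    using insert by (intro test_lin) auto
  then show ?case using insert(1,2) by simp
qed

lemma test_lap_comb:
  assumes "test_fun \<phi>"
  shows "test_fun (\<lambda>x. - lap \<phi> x + lam * \<phi> x)"
proof -
  have "test_fun (lap \<phi>)"
    unfolding lap_def[abs_def] by (intro test_sum) (auto intro: test_pd assms)
  then have "test_fun (\<lambda>x. (-1) * lap \<phi> x + lam * \<phi> x)" using assms by (intro test_lin)
  then show ?thesis by simp
qed

lemma int_shift_periodic:
  assumes "periodic R"
  shows "R (x + of_int k *\<^sub>R axis i 1) = R x"
proof (induction k rule: int_induct[where k=0])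
  case base then show ?case by simp
next
  case (step1 k)
  have eq: "x + of_int (k + 1) *\<^sub>R axis i 1 = (x + of_int k *\<^sub>R axis i 1) + axis i 1"
    by (simp add: algebra_simps)
  have "R (x + of_int (k + 1) *\<^sub>R axis i 1) = R ((x + of_int k *\<^sub>R axis i 1) + axis i 1)" by (simp only: eq)
  also have "\<dots> = R (x + of_int k *\<^sub>R axis i 1)" using assms unfolding periodic_def by blast
  finally show ?case using step1 by simp
next
  case (step2 k)
  have eq: "x + of_int k *\<^sub>R axis i 1 = (x + of_int (k - 1) *\<^sub>R axis i 1) + axis i 1"
    by (simp add: algebra_simps)
  have "R (x + of_int k *\<^sub>R axis i 1) = R ((x + of_int (k - 1) *\<^sub>R axis i 1) + axis i 1)" by (simp only: eq)
  also have "\<dots> = R (x + of_int (k - 1) *\<^sub>R axis i 1)" using assms unfolding periodic_def by blast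
  finally show ?case using step2 by simp
qed

lemma periodic_reduce:
  fixes R :: "real^'n::finite \<Rightarrow> 'b"
  assumes "periodic R"
  shows "\<exists>y\<in>cube. R y = R x"
proof -
  have gen: "R (x - (\<Sum>i\<in>S. of_int \<lfloor>x$i\<rfloor> *\<^sub>R axis i 1)) = R x" if "finite S" for S
    using that
  proof (induction S rule: finite_induct)
    case empty then show ?case by simp
  next
    case (insert j F)
    have eq: "x - (\<Sum>i\<in>insert j F. of_int \<lfloor>x$i\<rfloor> *\<^sub>R axis i 1) =
        (x - (\<Sum>i\<in>F. of_int \<lfloor>x$i\<rfloor> *\<^sub>R axis i 1)) + of_int (- \<lfloor>x$j\<rfloor>) *\<^sub>R axis j 1"
      using insert(1,2) by (simp add: algebra_simps)
    have "R (x - (\<Sum>i\<in>insert j F. of_int \<lfloor>x$i\<rfloor> *\<^sub>R axis i 1)) = R (x - (\<Sum>i\<in>F. of_int \<lfloor>x$i\<rfloor> *\<^sub>R axis i 1))"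
      unfolding eq by (rule int_shift_periodic[OF assms])
    then show ?case using insert(3) by simp
  qed
  define y where "y = x - (\<Sum>i\<in>UNIV. of_int \<lfloor>x$i\<rfloor> *\<^sub>R axis i 1)"
  have yj: "y $ j = x$j - of_int \<lfloor>x$j\<rfloor>" for j
  proof -
    have "(\<Sum>i\<in>UNIV. of_int \<lfloor>x$i\<rfloor> *\<^sub>R axis i (1::real)) $ j = (\<Sum>i\<in>UNIV. of_int \<lfloor>x$i\<rfloor> * (axis i 1 $ j))"
      by (simp add: sum_component)
    also have "\<dots> = (\<Sum>i\<in>UNIV. if i = j then of_int \<lfloor>x$i\<rfloor> else 0)"
      by (intro sum.cong) (auto simp: axis_def)
    also have "\<dots> = of_int \<lfloor>x$j\<rfloor>" by simp
    finally show ?thesis by (simp add: y_def)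
  qed
  have "0 \<le> y$j \<and> y$j \<le> 1" for j
    using yj[of j] of_int_floor_le[of "x$j"] real_of_int_floor_add_one_gt[of "x$j"] by linarith
  then have "y \<in> cube" by (simp add: cube_def mem_box_cart)
  moreover have "R y = R x" unfolding y_def by (rule gen) simp
  ultimately show ?thesis by blast
qed

lemma cont_zero:
  fixes R :: "real^'n::finite \<Rightarrow> real"
  assumes Rc: "continuous_on UNIV R" and Rp: "periodic R"
    and orth: "\<And>\<phi>. test_fun \<phi> \<Longrightarrow> (LINT x:cube|lborel. R x * \<phi> x) = 0"
  shows "R x = 0"
proof -
  have ae: "AE x in lborel. x \<in> cube \<longrightarrow> R x = 0"
  proof (rule fundamental_G)
    show "R \<in> borel_measurable lborel" using Rc by (simp add: borel_measurable_continuous_onI)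
    show "set_integrable lborel cube R" by (rule lint_cont(1)[OF Rc])
    show "(LINT x:cube|lborel. R x * \<phi> x) = 0" if "G \<phi>" for \<phi> using orth G_test that by blast
  qed
  have box0: "R y = 0" if y: "y \<in> box (0::real^'n) 1" for y
  proof (rule ccontr)
    assume ne: "R y \<noteq> 0"
    define U where "U = box (0::real^'n) 1 \<inter> {x. R x \<noteq> 0}"
    have oU: "open U" unfolding U_def
      by (intro open_Int open_box open_Collect_neq Rc continuous_on_const)
    have "U \<noteq> {}" using y ne by (auto simp: U_def)
    then have nn: "\<not> negligible U" using open_not_negligible oU by blast
    have Ub: "U \<in> sets lborel" using oU by simp
    have "AE x in lborel. x \<notin> U"
      using ae by eventually_elim (auto simp: U_def cube_def dest: subsetD[OF box_subset_cbox])
    then have "U \<in> null_sets lborel" using AE_iff_null_sets[OF Ub] by simp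
    then have "U \<in> null_sets lebesgue" by (rule null_sets_completionI)
    then have "negligible U" by (simp add: negligible_iff_null_sets)
    then show False using nn by simp
  qed
  have cube0: "R y = 0" if "y \<in> cube" for y
  proof -
    have "(1/2::real) *\<^sub>R (1::real^'n) \<in> box 0 1" by (simp add: mem_box_cart)
    then have ne: "box (0::real^'n) 1 \<noteq> {}" by blast
    have "y \<in> closure (box 0 1)" using that ne by (simp add: cube_def)
    moreover have "continuous_on (closure (box (0::real^'n) 1)) R" using Rc by (rule continuous_on_subset) simp
    ultimately show ?thesis using continuous_constant_on_closure[of "box 0 1" R 0 y] box0 by blast
  qed
  obtain y where "y \<in> cube" "R y = R x" using periodic_reduce[OF Rp] by blast
  then show ?thesis using cube0 by simp
qed

lemma si_mult_cont:
  fixes r \<phi> :: "real^'n::finite \<Rightarrow> real"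
  assumes ri: "set_integrable lborel cube r" and rm: "r \<in> borel_measurable lborel"
    and \<phi>c: "continuous_on UNIV \<phi>"
  shows "set_integrable lborel cube (\<lambda>x. r x * \<phi> x)"
proof -
  have "compact (\<phi> ` cube)" unfolding cube_def
    by (intro compact_continuous_image continuous_on_subset[OF \<phi>c]) auto
  then have "bounded (\<phi> ` cube)" by (rule compact_imp_bounded)
  then obtain B where "\<forall>y\<in>\<phi> ` cube. norm y \<le> B" unfolding bounded_iff by blast
  then have B: "\<And>x. x \<in> cube \<Longrightarrow> \<bar>\<phi> x\<bar> \<le> B" by auto
  have i1: "integrable lborel (\<lambda>x. B * \<bar>indicator cube x * r x\<bar>)"
    using ri unfolding set_integrable_def by (intro integrable_mult_right integrable_abs) simp
  show ?thesis
    unfolding set_integrable_def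
  proof (rule Bochner_Integration.integrable_bound[OF i1])
    show "(\<lambda>x. indicator cube x *\<^sub>R (r x * \<phi> x)) \<in> borel_measurable lborel"
      using rm \<phi>c by (auto simp: borel_measurable_continuous_onI cube_def intro!: borel_measurable_times borel_measurable_indicator)
    show "AE x in lborel. norm (indicator cube x *\<^sub>R (r x * \<phi> x)) \<le> norm (B * \<bar>indicator cube x * r x\<bar>)"
    proof (rule AE_I2)
      fix x
      show "norm (indicator cube x *\<^sub>R (r x * \<phi> x)) \<le> norm (B * \<bar>indicator cube x * r x\<bar>)"
      proof (cases "x \<in> cube")
        case True
        have "\<bar>r x\<bar> * \<bar>\<phi> x\<bar> \<le> \<bar>r x\<bar> * B" by (rule mult_left_mono[OF B[OF True]]) simp
        moreover have "0 \<le> B" using B[OF True] by linarith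
        ultimately show ?thesis using True by (simp add: abs_mult mult.commute)
      qed simp
    qed
  qed
qed

lemma L2_L1:
  fixes r :: "real^'n::finite \<Rightarrow> real"
  assumes "L2_fun r"
  shows "set_integrable lborel cube r" "r \<in> borel_measurable lborel"
proof -
  show rm: "r \<in> borel_measurable lborel" using assms by (simp add: L2_fun_def)
  have i2: "integrable lborel (\<lambda>x. indicator cube x * (r x)\<^sup>2)"
    using assms by (simp add: L2_fun_def set_integrable_def)
  have i1: "integrable lborel (\<lambda>x. indicator (cube::(real^'n) set) x * (1::real))"
    using lint_cont(1)[of "\<lambda>x::real^'n. 1::real"] by (simp add: set_integrable_def)
  show "set_integrable lborel cube r"
    unfolding set_integrable_def
  proof (rule Bochner_Integration.integrable_bound[OF Bochner_Integration.integrable_add[OF i1 i2]])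
    show "(\<lambda>x. indicator cube x *\<^sub>R r x) \<in> borel_measurable lborel"
      using rm by (auto simp: cube_def intro!: borel_measurable_times borel_measurable_indicator)
    show "AE x in lborel. norm (indicator cube x *\<^sub>R r x) \<le> norm (indicator cube x * 1 + indicator cube x * (r x)\<^sup>2)"
    proof (rule AE_I2)
      fix x
      have "0 \<le> (\<bar>r x\<bar> - 1)\<^sup>2" by simp
      then have "2 * \<bar>r x\<bar> \<le> 1 + (r x)\<^sup>2" by (simp add: power2_diff power2_abs)
      then have "\<bar>r x\<bar> \<le> 1 + (r x)\<^sup>2" by linarith
      then show "norm (indicator cube x *\<^sub>R r x) \<le> norm (indicator cube x * 1 + indicator cube x * (r x)\<^sup>2)"
        by (cases "x \<in> cube") auto
    qed
  qed
qed

lemma cint: "continuous_on UNIV g \<Longrightarrow> (g::real^'n::finite \<Rightarrow> real) integrable_on cube"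
  unfolding cube_def by (intro integrable_continuous) (auto intro: continuous_on_subset)

lemma ibp_hk:
  fixes a b :: "real^'n::finite \<Rightarrow> real"
  assumes A: "C1i i a" and B: "C1i i b"
  shows "integral cube (\<lambda>x. a x * pd i b x) = - integral cube (\<lambda>x. pd i a x * b x)"
proof -
  have c1: "continuous_on UNIV (\<lambda>x. a x * pd i b x)" "continuous_on UNIV (\<lambda>x. pd i a x * b x)"
    using A B by (auto simp: C1i_def intro!: continuous_intros)
  show ?thesis using ibp[OF A B] lint_cont(2)[OF c1(1)] lint_cont(2)[OF c1(2)] by simp
qed

lemma nsq: "(norm (v::real^'n::finite))\<^sup>2 = (\<Sum>i\<in>UNIV. v$i * v$i)"
  by (simp add: power2_norm_eq_inner inner_vec_def)

lemma C2i_cont: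
  assumes "C2i u"
  shows "continuous_on UNIV u" "continuous_on UNIV (pd i u)" "continuous_on UNIV (pd i (pd i u))"
    "C1i i u" "C1i i (pd i u)"
  using assms by (auto simp: C2i_def C1i_def)

lemma int_lin:
  fixes f :: "'a::euclidean_space \<Rightarrow> real" and g :: "'i::finite \<Rightarrow> 'a \<Rightarrow> real"
  assumes "f integrable_on S" "\<And>i. g i integrable_on S"
  shows "integral S (\<lambda>x. c * f x - (\<Sum>i\<in>UNIV. g i x)) = c * integral S f - (\<Sum>i\<in>UNIV. integral S (g i))"
proof -
  have a: "(\<lambda>x. c * f x) integrable_on S" using integrable_cmul[OF assms(1), of c] by simp
  have b: "(\<lambda>x. \<Sum>i\<in>UNIV. g i x) integrable_on S" using assms(2) by (intro integrable_sum) auto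
  have "integral S (\<lambda>x. c * f x - (\<Sum>i\<in>UNIV. g i x)) = integral S (\<lambda>x. c * f x) - integral S (\<lambda>x. \<Sum>i\<in>UNIV. g i x)"
    by (rule integral_diff[OF a b])
  also have "integral S (\<lambda>x. c * f x) = c * integral S f" by simp
  also have "integral S (\<lambda>x. \<Sum>i\<in>UNIV. g i x) = (\<Sum>i\<in>UNIV. integral S (g i))"
    using assms(2) by (intro integral_sum) auto
  finally show ?thesis .
qed

lemma E1:
  fixes u \<phi> :: "real^'n::finite \<Rightarrow> real"
  assumes U: "C2i u" and P: "C2i \<phi>"
  shows "integral cube (\<lambda>x. u x * (- lap \<phi> x + lam * \<phi> x)) = integral cube (\<lambda>x. (- lap u x + lam * u x) * \<phi> x)"
proof -
  note cu = C2i_cont[OF U] and cp = C2i_cont[OF P]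
  have i1: "(\<lambda>x. u x * \<phi> x) integrable_on cube" using cu cp by (intro cint continuous_intros) auto
  have i2: "(\<lambda>x. u x * pd i (pd i \<phi>) x) integrable_on cube" for i using cu cp by (intro cint continuous_intros) auto
  have i3: "(\<lambda>x. pd i (pd i u) x * \<phi> x) integrable_on cube" for i using cu cp by (intro cint continuous_intros) auto
  have i2s: "(\<lambda>x. \<Sum>i\<in>UNIV. u x * pd i (pd i \<phi>) x) integrable_on cube"
    using i2 by (intro integrable_sum) auto
  have i3s: "(\<lambda>x. \<Sum>i\<in>UNIV. pd i (pd i u) x * \<phi> x) integrable_on cube"
    using i3 by (intro integrable_sum) auto
  have per_i: "integral cube (\<lambda>x. u x * pd i (pd i \<phi>) x) = integral cube (\<lambda>x. pd i (pd i u) x * \<phi> x)" for i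
  proof -
    have "integral cube (\<lambda>x. u x * pd i (pd i \<phi>) x) = - integral cube (\<lambda>x. pd i u x * pd i \<phi> x)"
      by (rule ibp_hk[OF cu(4) cp(5)])
    also have "integral cube (\<lambda>x. pd i u x * pd i \<phi> x) = - integral cube (\<lambda>x. pd i (pd i u) x * \<phi> x)"
      by (rule ibp_hk[OF cu(5) cp(4)])
    finally show ?thesis by simp
  qed
  have "(\<lambda>x. u x * (- lap \<phi> x + lam * \<phi> x)) = (\<lambda>x. lam * (u x * \<phi> x) - (\<Sum>i\<in>UNIV. u x * pd i (pd i \<phi>) x))"
    by (auto simp: lap_def sum_distrib_left algebra_simps)
  then have "integral cube (\<lambda>x. u x * (- lap \<phi> x + lam * \<phi> x)) =
      lam * integral cube (\<lambda>x. u x * \<phi> x) - (\<Sum>i\<in>UNIV. integral cube (\<lambda>x. u x * pd i (pd i \<phi>) x))"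
    using int_lin[where g="\<lambda>i x. u x * pd i (pd i \<phi>) x", OF i1 i2, of lam] by simp
  also have "\<dots> = lam * integral cube (\<lambda>x. u x * \<phi> x) - (\<Sum>i\<in>UNIV. integral cube (\<lambda>x. pd i (pd i u) x * \<phi> x))"
    using per_i by simp
  also have "\<dots> = integral cube (\<lambda>x. lam * (u x * \<phi> x) - (\<Sum>i\<in>UNIV. pd i (pd i u) x * \<phi> x))"
    using int_lin[where g="\<lambda>i x. pd i (pd i u) x * \<phi> x", OF i1 i3, of lam] by simp
  also have "(\<lambda>x. lam * (u x * \<phi> x) - (\<Sum>i\<in>UNIV. pd i (pd i u) x * \<phi> x)) = (\<lambda>x. (- lap u x + lam * u x) * \<phi> x)"
    by (auto simp: lap_def sum_distrib_right sum_distrib_left algebra_simps)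
  finally show ?thesis .
qed

lemma E2:
  fixes u m \<phi> :: "real^'n::finite \<Rightarrow> real"
  assumes U: "C2i u" and M: "C2i m" and P: "C2i \<phi>"
  shows "integral cube (\<lambda>x. m x * (\<Sum>i\<in>UNIV. pd i u x * pd i \<phi> x)) =
     - integral cube (\<lambda>x. (\<Sum>i\<in>UNIV. pd i (\<lambda>y. m y * pd i u y) x) * \<phi> x)"
proof -
  note cu = C2i_cont[OF U] and cm = C2i_cont[OF M] and cp = C2i_cont[OF P]
  have A: "C1i i (\<lambda>y. m y * pd i u y)" for i by (rule C1i_mult[OF cm(4) cu(5)])
  have cA: "continuous_on UNIV (pd i (\<lambda>y. m y * pd i u y))" for i using A by (simp add: C1i_def)
  have i1: "(\<lambda>x. m x * pd i u x * pd i \<phi> x) integrable_on cube" for i using cu cm cp by (intro cint continuous_intros) auto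
  have i2: "(\<lambda>x. pd i (\<lambda>y. m y * pd i u y) x * \<phi> x) integrable_on cube" for i
    using cA cp by (intro cint continuous_intros) auto
  have "integral cube (\<lambda>x. m x * (\<Sum>i\<in>UNIV. pd i u x * pd i \<phi> x)) = integral cube (\<lambda>x. \<Sum>i\<in>UNIV. m x * pd i u x * pd i \<phi> x)"
    by (simp add: sum_distrib_left mult.assoc)
  also have "\<dots> = (\<Sum>i\<in>UNIV. integral cube (\<lambda>x. m x * pd i u x * pd i \<phi> x))"
    using i1 by (simp add: integral_sum)
  also have "\<dots> = (\<Sum>i\<in>UNIV. - integral cube (\<lambda>x. pd i (\<lambda>y. m y * pd i u y) x * \<phi> x))"
    using ibp_hk[OF A cp(4)] by simp
  also have "\<dots> = - integral cube (\<lambda>x. \<Sum>i\<in>UNIV. pd i (\<lambda>y. m y * pd i u y) x * \<phi> x)"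
    using i2 by (simp add: integral_sum sum_negf)
  also have "\<dots> = - integral cube (\<lambda>x. (\<Sum>i\<in>UNIV. pd i (\<lambda>y. m y * pd i u y) x) * \<phi> x)"
    by (simp add: sum_distrib_right)
  finally show ?thesis .
qed

lemma distr_neg:
  fixes u :: "real^'n::finite \<Rightarrow> real"
  assumes uc: "continuous_on UNIV u"
  shows "distr (\<lambda>\<phi>. - distr_of u \<phi>)"
  unfolding distr_def
proof (intro conjI allI impI)
  fix \<phi> :: "real^'n \<Rightarrow> real" assume "\<not> test_fun \<phi>"
  then show "- distr_of u \<phi> = 0" by (simp add: distr_of_def)
next
  fix \<phi> \<psi> :: "real^'n \<Rightarrow> real" and a b :: real
  assume t: "test_fun \<phi> \<and> test_fun \<psi>"
  then have tl: "test_fun (\<lambda>x. a * \<phi> x + b * \<psi> x)" by (intro test_lin) auto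
  have c\<phi>: "continuous_on UNIV \<phi>" and c\<psi>: "continuous_on UNIV \<psi>"
    using t test_C1i unfolding C1i_def by blast+
  have i1: "(\<lambda>x. u x * \<phi> x) integrable_on cube" and i2: "(\<lambda>x. u x * \<psi> x) integrable_on cube"
    using uc c\<phi> c\<psi> by (auto intro!: cint continuous_intros)
  have "distr_of u (\<lambda>x. a * \<phi> x + b * \<psi> x) = integral cube (\<lambda>x. u x * (a * \<phi> x + b * \<psi> x))"
    using tl lint_cont(2)[of "\<lambda>x. u x * (a * \<phi> x + b * \<psi> x)"] uc c\<phi> c\<psi>
    by (simp add: distr_of_def continuous_intros)
  also have "(\<lambda>x. u x * (a * \<phi> x + b * \<psi> x)) = (\<lambda>x. a * (u x * \<phi> x) + b * (u x * \<psi> x))"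
    by (auto simp: algebra_simps)
  also have "integral cube \<dots> = a * integral cube (\<lambda>x. u x * \<phi> x) + b * integral cube (\<lambda>x. u x * \<psi> x)"
    using integrable_cmul[OF i1, of a] integrable_cmul[OF i2, of b] by (simp add: integral_add)
  also have "\<dots> = a * distr_of u \<phi> + b * distr_of u \<psi>"
    using t lint_cont(2)[of "\<lambda>x. u x * \<phi> x"] lint_cont(2)[of "\<lambda>x. u x * \<psi> x"] uc c\<phi> c\<psi>
    by (simp add: distr_of_def continuous_intros)
  finally show "- distr_of u (\<lambda>x. a * \<phi> x + b * \<psi> x) = a * - distr_of u \<phi> + b * - distr_of u \<psi>"
    by simp
qed

lemma ident_gen:
  fixes w c :: "real^'n::finite \<Rightarrow> real"
  assumes wm: "w \<in> borel_measurable lborel" and wi: "set_integrable lborel cube w"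
    and cc: "continuous_on UNIV c"
    and eq: "\<And>\<phi>. test_fun \<phi> \<Longrightarrow> (LINT x:cube|lborel. w x * \<phi> x) = (LINT x:cube|lborel. c x * \<phi> x)"
  shows "AE x in lborel. x \<in> cube \<longrightarrow> w x = c x"
proof -
  have "AE x in lborel. x \<in> cube \<longrightarrow> w x - c x = 0"
  proof (rule fundamental_G)
    show "(\<lambda>x. w x - c x) \<in> borel_measurable lborel"
    proof -
      have "c \<in> borel_measurable borel" using cc by (rule borel_measurable_continuous_onI)
      then show ?thesis using wm by simp
    qed
    show "set_integrable lborel cube (\<lambda>x. w x - c x)"
      by (rule set_integral_diff(1)[OF wi lint_cont(1)[OF cc]])
    fix \<phi> :: "real^'n \<Rightarrow> real" assume "G \<phi>"
    then have t: "test_fun \<phi>" and pc: "continuous_on UNIV \<phi>" using G_test G_props by blast+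
    have s1: "set_integrable lborel cube (\<lambda>x. w x * \<phi> x)" by (rule si_mult_cont[OF wi wm pc])
    have s2: "set_integrable lborel cube (\<lambda>x. c x * \<phi> x)" using cc pc by (intro lint_cont(1) continuous_intros)
    have "(LINT x:cube|lborel. (w x - c x) * \<phi> x) = (LINT x:cube|lborel. w x * \<phi> x - c x * \<phi> x)"
      by (simp add: algebra_simps)
    also have "\<dots> = (LINT x:cube|lborel. w x * \<phi> x) - (LINT x:cube|lborel. c x * \<phi> x)"
      by (rule set_integral_diff(2)[OF s1 s2])
    also have "\<dots> = 0" using eq[OF t] by simp
    finally show "(LINT x:cube|lborel. (w x - c x) * \<phi> x) = 0" .
  qed
  then show ?thesis by eventually_elim simp
qed

lemma ident_r:
  fixes r m :: "real^'n::finite \<Rightarrow> real"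
  assumes L: "L2_fun r" and eq: "distr_of m = distr_of r" and mc: "continuous_on UNIV m"
  shows "AE x in lborel. x \<in> cube \<longrightarrow> r x = m x"
proof (rule ident_gen[OF L2_L1(2)[OF L] L2_L1(1)[OF L] mc])
  fix \<phi> :: "real^'n \<Rightarrow> real" assume t: "test_fun \<phi>"
  have "distr_of m \<phi> = distr_of r \<phi>" using eq by simp
  then show "(LINT x:cube|lborel. r x * \<phi> x) = (LINT x:cube|lborel. m x * \<phi> x)"
    using t by (simp add: distr_of_def)
qed

lemma ident_g:
  fixes u v :: "real^'n::finite \<Rightarrow> real" and g :: "real^'n \<Rightarrow> real^'n"
  assumes hr: "h1_rep (distr_of u) v g" and U: "C2i u"
  shows "AE x in lborel. x \<in> cube \<longrightarrow> g x $ i = pd i u x"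
proof -
  have Lg: "L2_fun (\<lambda>x. g x $ i)" and eqd: "distr_of u = distr_of v"
    and wk: "\<And>\<phi>. test_fun \<phi> \<Longrightarrow> (LINT x:cube|lborel. v x * pd i \<phi> x) = - (LINT x:cube|lborel. g x $ i * \<phi> x)"
    using hr unfolding h1_rep_def by auto
  show ?thesis
  proof (rule ident_gen[OF L2_L1(2)[OF Lg] L2_L1(1)[OF Lg] C2i_cont(2)[OF U]])
    fix \<phi> :: "real^'n \<Rightarrow> real" assume t: "test_fun \<phi>"
    have tp: "test_fun (pd i \<phi>)" by (rule test_pd[OF t])
    have "distr_of u (pd i \<phi>) = distr_of v (pd i \<phi>)" using eqd by simp
    then have e1: "(LINT x:cube|lborel. u x * pd i \<phi> x) = (LINT x:cube|lborel. v x * pd i \<phi> x)"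
      using tp by (simp add: distr_of_def)
    have e2: "(LINT x:cube|lborel. u x * pd i \<phi> x) = - (LINT x:cube|lborel. pd i u x * \<phi> x)"
      by (rule ibp[OF C2i_cont(4)[OF U] test_C1i[OF t]])
    show "(LINT x:cube|lborel. g x $ i * \<phi> x) = (LINT x:cube|lborel. pd i u x * \<phi> x)"
      using e1 e2 wk[OF t] by simp
  qed
qed

theorem proposition3p1:
  fixes \<alpha> lam :: real and f :: "real \<Rightarrow> real" and m0 u m :: "real^'n \<Rightarrow> real"
    and X Z :: "'n dpair set" and NX NZ :: "'n dpair \<Rightarrow> real" and T :: "'n dpair \<Rightarrow> 'n dpair"
  assumes "0 < \<alpha>" "\<alpha> < 1" "0 < lam"
    and "prob_density_C0a \<alpha> m0"
    and "W1inf_R f"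
    and "hypH \<alpha> lam f m0 X NX Z NZ T"
    and "C2a \<alpha> u" "C2a \<alpha> m"
  shows "MFG_solution lam f m0 u m \<longleftrightarrow>
         padd (distr_of u, distr_of m) (T (Gmap f lam m0 (distr_of u, distr_of m))) = pzero"
proof -
  have Cu: "C2i u" by (rule C2a_C2i[OF assms(7) assms(1)])
  have Cm: "C2i m" by (rule C2a_C2i[OF assms(8) assms(1)])
  have m0c: "continuous_on UNIV m0" and m0p: "periodic m0"
    using assms(4) holder_cont[OF _ assms(1), of m0] by (auto simp: prob_density_C0a_def C0a_def)
  obtain L where "L-lipschitz_on UNIV f" using assms(5) by (auto simp: W1inf_R_def)
  then have fc: "continuous_on UNIV f" by (rule lipschitz_on_continuous_on)
  have hX: "(distr_of u, distr_of m) \<in> X" using assms(6,7,8) unfolding hypH_def by blast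
  have hXH: "\<forall>w\<in>X. H1d (fst w) \<and> L2d (snd w)" using assms(6) unfolding hypH_def by blast
  have hG: "\<forall>w\<in>X. Gmap f lam m0 w \<in> Z" using assms(6) unfolding hypH_def by blast
  have hT: "\<forall>z\<in>Z. T z \<in> X \<and> dist_sol_pair lam z (T z) \<and> (\<forall>w. dist_sol_pair lam z w \<longrightarrow> w = T z)"
    using assms(6) unfolding hypH_def by blast
  define w0 where "w0 = (distr_of u, distr_of m)"
  define z0 where "z0 = Gmap f lam m0 w0"
  have z0Z: "z0 \<in> Z" using hG hX by (simp add: z0_def w0_def)
  have Tsol: "dist_sol_pair lam z0 (T z0)" and Tuniq: "\<And>w. dist_sol_pair lam z0 w \<Longrightarrow> w = T z0"
    using hT z0Z by blast+
  have H1u: "H1d (distr_of u)" and L2m: "L2d (distr_of m)" using hXH hX by auto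
  define r where "r = l2_val (distr_of m)"
  have rprop: "L2_fun r \<and> distr_of m = distr_of r"
    using L2m unfolding L2d_def l2_val_def r_def by (rule someI_ex)
  define g where "g = h1_grad (distr_of u)"
  define v1 where "v1 = h1_val (distr_of u)"
  have gprop: "h1_rep (distr_of u) v1 g"
  proof -
    obtain v g' where "h1_rep (distr_of u) v g'" using H1u unfolding H1d_def by blast
    then have "\<exists>p. h1_rep (distr_of u) (fst p) (snd p)" by (intro exI[of _ "(v, g')"]) simp
    then have "h1_rep (distr_of u) (fst (SOME p. h1_rep (distr_of u) (fst p) (snd p))) (snd (SOME p. h1_rep (distr_of u) (fst p) (snd p)))"
      by (rule someI_ex)
    then show ?thesis by (simp add: v1_def g_def h1_val_def h1_grad_def)
  qed
  have Lgi: "L2_fun (\<lambda>x. g x $ i)" for i using gprop by (simp add: h1_rep_def)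
  have rL: "L2_fun r" using rprop by simp
  have z0eq: "z0 = (distr_of (\<lambda>x. (norm (g x))\<^sup>2 / 2 - f (r x)),
       (\<lambda>\<phi>. if test_fun \<phi> then (LINT x:cube|lborel. r x * (g x \<bullet> grad \<phi> x))
                               - lam * (LINT x:cube|lborel. m0 x * \<phi> x) else 0))"
    unfolding z0_def w0_def Gmap_def r_def g_def Let_def fst_conv snd_conv by (rule refl)
  note cu = C2i_cont[OF Cu] and cm = C2i_cont[OF Cm]
  have AEr: "AE x in lborel. x \<in> cube \<longrightarrow> r x = m x"
    using ident_r rprop cm(1) by blast
  have AEg: "AE x in lborel. \<forall>i. x \<in> cube \<longrightarrow> g x $ i = pd i u x"
    unfolding AE_all_countable using ident_g[OF gprop Cu] by blast
  have AEall: "AE x in lborel. x \<in> cube \<longrightarrow> r x = m x \<and> (\<forall>i. g x $ i = pd i u x)"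
    using AEr AEg by eventually_elim auto
  have rm: "r \<in> borel_measurable lborel" using L2_L1(2)[OF rL] .
  have gm: "(\<lambda>x. g x $ i) \<in> borel_measurable lborel" for i using L2_L1(2)[OF Lgi] .
  have fr: "(\<lambda>x. f (r x)) \<in> borel_measurable lborel" using borel_measurable_continuous_on[OF fc rm] .
  define N1 where "N1 x = (\<Sum>i\<in>UNIV. pd i u x * pd i u x) / 2 - f (m x)" for x
  define L1 where "L1 x = - lap u x + lam * u x" for x
  define Dv where "Dv x = (\<Sum>i\<in>UNIV. pd i (\<lambda>y. m y * pd i u y) x)" for x
  define L2 where "L2 x = - lap m x + lam * m x" for x
  define R1 where "R1 x = L1 x + N1 x" for x
  define R2 where "R2 x = L2 x - Dv x - lam * m0 x" for x
  have lapc: "continuous_on UNIV (lap w)" if "C2i w" for w :: "real^'n \<Rightarrow> real"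
    unfolding lap_def[abs_def] using C2i_cont(3)[OF that] by (intro continuous_intros) auto
  have N1c: "continuous_on UNIV N1" unfolding N1_def[abs_def]
    using cu cm by (intro continuous_intros continuous_on_compose2[OF fc]) auto
  have L1c: "continuous_on UNIV L1" unfolding L1_def[abs_def] using lapc[OF Cu] cu by (intro continuous_intros) auto
  have L2c: "continuous_on UNIV L2" unfolding L2_def[abs_def] using lapc[OF Cm] cm by (intro continuous_intros) auto
  have Dvc: "continuous_on UNIV Dv" unfolding Dv_def[abs_def]
    using C1i_mult[OF cm(4) cu(5)] by (intro continuous_intros) (auto simp: C1i_def)
  have R1c: "continuous_on UNIV R1" unfolding R1_def[abs_def] using L1c N1c by (intro continuous_intros)
  have R2c: "continuous_on UNIV R2" unfolding R2_def[abs_def] using L2c Dvc m0c by (intro continuous_intros)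
  have perpd: "periodic (pd i w)" if "periodic w" for i and w :: "real^'n \<Rightarrow> real" using periodic_pd that .
  have pu: "periodic u" and pm: "periodic m" using cu(4) cm(4) by (auto simp: C1i_def)
  have R1p: "periodic R1"
    using perpd[OF pu] perpd[OF perpd[OF pu]] pu pm
    unfolding periodic_def R1_def L1_def N1_def lap_def by simp
  have R2p: "periodic R2"
  proof -
    have "periodic (\<lambda>y. m y * pd i u y)" for i using pm perpd[OF pu] by (simp add: periodic_def)
    then have "periodic (pd i (\<lambda>y. m y * pd i u y))" for i by (rule perpd)
    then show ?thesis
      using perpd[OF pm] perpd[OF perpd[OF pm]] pm m0p
      unfolding periodic_def R2_def L2_def Dv_def lap_def by simp
  qed
  define \<Psi> where "\<Psi> \<phi> = (\<lambda>x. - lap \<phi> x + lam * \<phi> x)" for \<phi> :: "real^'n \<Rightarrow> real"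
  have c1: "distr_of u (\<Psi> \<phi>) = integral cube (\<lambda>x. L1 x * \<phi> x)" if t: "test_fun \<phi>" for \<phi>
  proof -
    have "distr_of u (\<Psi> \<phi>) = (LINT x:cube|lborel. u x * \<Psi> \<phi> x)"
      using test_lap_comb[OF t, of lam] by (simp add: distr_of_def \<Psi>_def)
    also have "\<dots> = integral cube (\<lambda>x. u x * \<Psi> \<phi> x)"
      using lapc[OF test_C2i[OF t]] cu(1) C2i_cont(1)[OF test_C2i[OF t]]
      by (intro lint_cont(2)) (auto simp: \<Psi>_def intro!: continuous_intros)
    also have "\<dots> = integral cube (\<lambda>x. L1 x * \<phi> x)"
      unfolding \<Psi>_def L1_def by (rule E1[OF Cu test_C2i[OF t]])
    finally show ?thesis .
  qed
  have c3: "distr_of m (\<Psi> \<phi>) = integral cube (\<lambda>x. L2 x * \<phi> x)" if t: "test_fun \<phi>" for \<phi>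
  proof -
    have "distr_of m (\<Psi> \<phi>) = (LINT x:cube|lborel. m x * \<Psi> \<phi> x)"
      using test_lap_comb[OF t, of lam] by (simp add: distr_of_def \<Psi>_def)
    also have "\<dots> = integral cube (\<lambda>x. m x * \<Psi> \<phi> x)"
      using lapc[OF test_C2i[OF t]] cm(1) C2i_cont(1)[OF test_C2i[OF t]]
      by (intro lint_cont(2)) (auto simp: \<Psi>_def intro!: continuous_intros)
    also have "\<dots> = integral cube (\<lambda>x. L2 x * \<phi> x)"
      unfolding \<Psi>_def L2_def by (rule E1[OF Cm test_C2i[OF t]])
    finally show ?thesis .
  qed
  have c2: "fst z0 \<phi> = integral cube (\<lambda>x. N1 x * \<phi> x)" if t: "test_fun \<phi>" for \<phi>
  proof -
    have pc: "continuous_on UNIV \<phi>" using C2i_cont(1)[OF test_C2i[OF t]] .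
    have "fst z0 \<phi> = (LINT x:cube|lborel. ((\<Sum>i\<in>UNIV. g x $ i * g x $ i) / 2 - f (r x)) * \<phi> x)"
      using t by (simp add: z0eq distr_of_def nsq)
    also have "\<dots> = (LINT x:cube|lborel. N1 x * \<phi> x)"
    proof (rule set_lebesgue_integral_cong_AE)
      show "cube \<in> sets lborel" by (simp add: cube_def)
      show "(\<lambda>x. ((\<Sum>i\<in>UNIV. g x $ i * g x $ i) / 2 - f (r x)) * \<phi> x) \<in> borel_measurable lborel"
        using gm fr borel_measurable_continuous_onI[OF pc] by simp
      show "(\<lambda>x. N1 x * \<phi> x) \<in> borel_measurable lborel"
        using borel_measurable_continuous_onI[OF N1c] borel_measurable_continuous_onI[OF pc] by simp
      show "AE x\<in>cube in lborel. ((\<Sum>i\<in>UNIV. g x $ i * g x $ i) / 2 - f (r x)) * \<phi> x = N1 x * \<phi> x"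
        using AEall by eventually_elim (auto simp: N1_def)
    qed
    also have "\<dots> = integral cube (\<lambda>x. N1 x * \<phi> x)"
      using N1c pc by (intro lint_cont(2) continuous_intros)
    finally show ?thesis .
  qed
  have c4: "snd z0 \<phi> = - integral cube (\<lambda>x. Dv x * \<phi> x) - lam * integral cube (\<lambda>x. m0 x * \<phi> x)"
    if t: "test_fun \<phi>" for \<phi>
  proof -
    have P: "C2i \<phi>" by (rule test_C2i[OF t])
    have pc: "continuous_on UNIV \<phi>" using C2i_cont(1)[OF P] .
    have pdc: "continuous_on UNIV (pd i \<phi>)" for i using C2i_cont(2)[OF P] .
    have gi: "g x \<bullet> grad \<phi> x = (\<Sum>i\<in>UNIV. g x $ i * pd i \<phi> x)" for x
      by (simp add: inner_vec_def grad_def)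
    have "snd z0 \<phi> = (LINT x:cube|lborel. r x * (\<Sum>i\<in>UNIV. g x $ i * pd i \<phi> x)) - lam * (LINT x:cube|lborel. m0 x * \<phi> x)"
      using t by (simp add: z0eq gi)
    also have "(LINT x:cube|lborel. r x * (\<Sum>i\<in>UNIV. g x $ i * pd i \<phi> x)) =
        (LINT x:cube|lborel. m x * (\<Sum>i\<in>UNIV. pd i u x * pd i \<phi> x))"
    proof (rule set_lebesgue_integral_cong_AE)
      show "cube \<in> sets lborel" by (simp add: cube_def)
      have "(\<lambda>x. pd i \<phi> x) \<in> borel_measurable lborel" for i using borel_measurable_continuous_onI[OF pdc] by simp
      then show "(\<lambda>x. r x * (\<Sum>i\<in>UNIV. g x $ i * pd i \<phi> x)) \<in> borel_measurable lborel"
        using gm rm by simp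
      have "continuous_on UNIV (\<lambda>x. m x * (\<Sum>i\<in>UNIV. pd i u x * pd i \<phi> x))"
        using cm cu pdc by (intro continuous_intros) auto
      then show "(\<lambda>x. m x * (\<Sum>i\<in>UNIV. pd i u x * pd i \<phi> x)) \<in> borel_measurable lborel"
        using borel_measurable_continuous_onI by simp
      show "AE x\<in>cube in lborel. r x * (\<Sum>i\<in>UNIV. g x $ i * pd i \<phi> x) = m x * (\<Sum>i\<in>UNIV. pd i u x * pd i \<phi> x)"
        using AEall by eventually_elim auto
    qed
    also have "\<dots> = integral cube (\<lambda>x. m x * (\<Sum>i\<in>UNIV. pd i u x * pd i \<phi> x))"
      using cm cu pdc by (intro lint_cont(2) continuous_intros) auto
    also have "\<dots> = - integral cube (\<lambda>x. Dv x * \<phi> x)"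
      unfolding Dv_def by (rule E2[OF Cu Cm P])
    also have "(LINT x:cube|lborel. m0 x * \<phi> x) = integral cube (\<lambda>x. m0 x * \<phi> x)"
      using m0c pc by (intro lint_cont(2) continuous_intros)
    finally show ?thesis by simp
  qed
  have eq1: "(- distr_of u (\<Psi> \<phi>) = fst z0 \<phi>) \<longleftrightarrow> integral cube (\<lambda>x. R1 x * \<phi> x) = 0" if t: "test_fun \<phi>" for \<phi>
  proof -
    have pc: "continuous_on UNIV \<phi>" using C2i_cont(1)[OF test_C2i[OF t]] .
    have "integral cube (\<lambda>x. R1 x * \<phi> x) = integral cube (\<lambda>x. L1 x * \<phi> x + N1 x * \<phi> x)"
      by (simp add: R1_def algebra_simps)
    also have "\<dots> = integral cube (\<lambda>x. L1 x * \<phi> x) + integral cube (\<lambda>x. N1 x * \<phi> x)"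
      using L1c N1c pc by (intro integral_add cint continuous_intros)
    finally show ?thesis using c1[OF t] c2[OF t] by linarith
  qed
  have eq2: "(- distr_of m (\<Psi> \<phi>) = snd z0 \<phi>) \<longleftrightarrow> integral cube (\<lambda>x. R2 x * \<phi> x) = 0" if t: "test_fun \<phi>" for \<phi>
  proof -
    have pc: "continuous_on UNIV \<phi>" using C2i_cont(1)[OF test_C2i[OF t]] .
    have i1: "(\<lambda>x. L2 x * \<phi> x) integrable_on cube" "(\<lambda>x. Dv x * \<phi> x) integrable_on cube"
      "(\<lambda>x. m0 x * \<phi> x) integrable_on cube"
      using L2c Dvc m0c pc by (auto intro!: cint continuous_intros)
    have "integral cube (\<lambda>x. R2 x * \<phi> x) = integral cube (\<lambda>x. (L2 x * \<phi> x - Dv x * \<phi> x) - lam * (m0 x * \<phi> x))"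
      by (simp add: R2_def algebra_simps)
    also have "\<dots> = integral cube (\<lambda>x. L2 x * \<phi> x - Dv x * \<phi> x) - integral cube (\<lambda>x. lam * (m0 x * \<phi> x))"
    proof -
      have i4: "(\<lambda>x. lam * (m0 x * \<phi> x)) integrable_on cube" using m0c pc by (intro cint continuous_intros)
      show ?thesis using i1 i4 by (intro integral_diff integrable_diff) auto
    qed
    also have "\<dots> = integral cube (\<lambda>x. L2 x * \<phi> x) - integral cube (\<lambda>x. Dv x * \<phi> x) - lam * integral cube (\<lambda>x. m0 x * \<phi> x)"
      using i1 by (simp add: integral_diff)
    finally show ?thesis using c3[OF t] c4[OF t] by linarith
  qed
  define wneg where "wneg = ((\<lambda>\<phi>. - distr_of u \<phi>), (\<lambda>\<phi>. - distr_of m \<phi>))"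
  have dwneg: "distr (fst wneg)" "distr (snd wneg)"
    unfolding wneg_def using distr_neg[OF cu(1)] distr_neg[OF cm(1)] by simp_all
  have sol_iff: "dist_sol_pair lam z0 wneg \<longleftrightarrow>
      (\<forall>\<phi>. test_fun \<phi> \<longrightarrow> integral cube (\<lambda>x. R1 x * \<phi> x) = 0 \<and> integral cube (\<lambda>x. R2 x * \<phi> x) = 0)"
    unfolding dist_sol_pair_def dist_sol_def using dwneg eq1 eq2
    by (auto simp: wneg_def \<Psi>_def)
  have MFG_iff: "MFG_solution lam f m0 u m \<longleftrightarrow> (\<forall>x. R1 x = 0) \<and> (\<forall>x. R2 x = 0)"
  proof -
    have n: "(norm (grad u x))\<^sup>2 = (\<Sum>i\<in>UNIV. pd i u x * pd i u x)" for x
      by (simp add: nsq grad_def)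
    have d: "diverg (\<lambda>y. m y *\<^sub>R grad u y) x = Dv x" for x
      by (simp add: diverg_def Dv_def grad_def)
    show ?thesis
      unfolding MFG_solution_def n d R1_def R2_def L1_def N1_def L2_def by (auto simp: algebra_simps)
  qed
  have goal_eq: "padd (distr_of u, distr_of m) (T (Gmap f lam m0 (distr_of u, distr_of m))) = pzero
      \<longleftrightarrow> T z0 = wneg"
  proof
    assume h: "padd (distr_of u, distr_of m) (T (Gmap f lam m0 (distr_of u, distr_of m))) = pzero"
    then have h': "padd w0 (T z0) = pzero" by (simp add: w0_def z0_def)
    have "fst (T z0) = (\<lambda>\<phi>. - distr_of u \<phi>)"
    proof
      fix \<phi> have "dadd (distr_of u) (fst (T z0)) \<phi> = dzero \<phi>" using h' by (simp add: padd_def pzero_def w0_def)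
      then show "fst (T z0) \<phi> = - distr_of u \<phi>" by (simp add: dadd_def dzero_def add_eq_0_iff2)
    qed
    moreover have "snd (T z0) = (\<lambda>\<phi>. - distr_of m \<phi>)"
    proof
      fix \<phi> have "dadd (distr_of m) (snd (T z0)) \<phi> = dzero \<phi>" using h' by (simp add: padd_def pzero_def w0_def)
      then show "snd (T z0) \<phi> = - distr_of m \<phi>" by (simp add: dadd_def dzero_def add_eq_0_iff2)
    qed
    ultimately show "T z0 = wneg" by (simp add: wneg_def prod_eq_iff)
  next
    assume "T z0 = wneg"
    then show "padd (distr_of u, distr_of m) (T (Gmap f lam m0 (distr_of u, distr_of m))) = pzero"
      by (simp add: w0_def z0_def wneg_def padd_def pzero_def dadd_def dzero_def)
  qed
  show ?thesis
  proof
    assume "MFG_solution lam f m0 u m"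
    then have "\<forall>x. R1 x = 0" "\<forall>x. R2 x = 0" using MFG_iff by auto
    then have "dist_sol_pair lam z0 wneg" using sol_iff by simp
    then have "T z0 = wneg" using Tuniq by simp
    then show "padd (distr_of u, distr_of m) (T (Gmap f lam m0 (distr_of u, distr_of m))) = pzero"
      using goal_eq by simp
  next
    assume "padd (distr_of u, distr_of m) (T (Gmap f lam m0 (distr_of u, distr_of m))) = pzero"
    then have "T z0 = wneg" using goal_eq by simp
    then have "dist_sol_pair lam z0 wneg" using Tsol by simp
    then have o: "\<And>\<phi>. test_fun \<phi> \<Longrightarrow> integral cube (\<lambda>x. R1 x * \<phi> x) = 0 \<and> integral cube (\<lambda>x. R2 x * \<phi> x) = 0"
      using sol_iff by simp
    have "R1 x = 0" for x
    proof (rule cont_zero[OF R1c R1p])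
      fix \<phi> :: "real^'n \<Rightarrow> real" assume t: "test_fun \<phi>"
      have pc: "continuous_on UNIV \<phi>" using C2i_cont(1)[OF test_C2i[OF t]] .
      show "(LINT x:cube|lborel. R1 x * \<phi> x) = 0"
        using o[OF t] lint_cont(2)[of "\<lambda>x. R1 x * \<phi> x"] R1c pc by (simp add: continuous_intros)
    qed
    moreover have "R2 x = 0" for x
    proof (rule cont_zero[OF R2c R2p])
      fix \<phi> :: "real^'n \<Rightarrow> real" assume t: "test_fun \<phi>"
      have pc: "continuous_on UNIV \<phi>" using C2i_cont(1)[OF test_C2i[OF t]] .
      show "(LINT x:cube|lborel. R2 x * \<phi> x) = 0"
        using o[OF t] lint_cont(2)[of "\<lambda>x. R2 x * \<phi> x"] R2c pc by (simp add: continuous_intros)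
    qed
    ultimately show "MFG_solution lam f m0 u m" using MFG_iff by auto
  qed
qed

end
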